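(* Let $B$ be a ring and $M$ a left $B$-module with endomorphism ring $S={}_B\mathrm{End}(M)$. If $M$ is a generator of $\sigma[M]$, then $M$ is a formally smooth $B$-$S$ bimodule.
   Context: Left $B$-linear maps are written on the right of arguments, so $S$ acts on $M$ on the right. For a $B$-$A$ bimodule $M$: ${}^*M={}_B\mathrm{Hom}(M,B)$ is an $A$-$B$ bimodule via $(m)(afb)=((ma)f)b$; $\mathrm{ev}_M:M\otimes_A{}^*M\to B$, $m\otimes f\mapsto(m)f$; $\mathcal{E}_{M,B}$ is the class of $B$-bimodule maps $f:Y\to Y'$ such that ${}_B\mathrm{Hom}(M,f)$ has a right inverse as an $A$-$B$ bimodule map; a $B$-bimodule $P$ is $\mathcal{E}_{M,B}$-projective if for every $f:Y\to Y'$ in $\mathcal{E}_{M,B}$ every $B$-bimodule map $P\to Y'$ factors through $f$; $M$ is a formally smooth bimodule if $\mathrm{Ker}(\mathrm{ev}_M)$ is $\mathcal{E}_{M,B}$-projective. $\sigma[M]$ is the full subcategory of left $B$-modules subgenerated by $M$ (isomorphic to submodules of quotients of direct sums of copies of $M$); $M$ generates $\sigma[M]$ if every module in $\sigma[M]$ is a quotient of a direct sum of copies of $M$. *)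

theory Defs
  imports Main "HOL-Library.Function_Algebras"
begin

(* Left B-linear maps are ordinary HOL functions; following the paper they are
   "written on the right", i.e. (m)s is s m, so S = End_B(M) acts on the right
   of M and composition in S is reversed.  *)

definition lmod :: "('b::ring_1 \<Rightarrow> 'm::ab_group_add \<Rightarrow> 'm) \<Rightarrow> bool" where
  "lmod sm \<longleftrightarrow> (\<forall>b x y. sm b (x + y) = sm b x + sm b y) \<and>
                (\<forall>a b x. sm (a + b) x = sm a x + sm b x) \<and>
                (\<forall>a b x. sm (a * b) x = sm a (sm b x)) \<and>
                (\<forall>x. sm 1 x = x)"

definition rmod :: "('y::ab_group_add \<Rightarrow> 'b::ring_1 \<Rightarrow> 'y) \<Rightarrow> bool" where
  "rmod rm \<longleftrightarrow> (\<forall>b x y. rm (x + y) b = rm x b + rm y b) \<and>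
                (\<forall>a b x. rm x (a + b) = rm x a + rm x b) \<and>
                (\<forall>a b x. rm x (a * b) = rm (rm x a) b) \<and>
                (\<forall>x. rm x 1 = x)"

definition bimod :: "('b::ring_1 \<Rightarrow> 'y::ab_group_add \<Rightarrow> 'y) \<Rightarrow> ('y \<Rightarrow> 'b \<Rightarrow> 'y) \<Rightarrow> bool" where
  "bimod l r \<longleftrightarrow> lmod l \<and> rmod r \<and> (\<forall>a b y. r (l a y) b = l a (r y b))"

definition blin :: "('b::ring_1 \<Rightarrow> 'x::ab_group_add \<Rightarrow> 'x) \<Rightarrow> ('b \<Rightarrow> 'y::ab_group_add \<Rightarrow> 'y)
                     \<Rightarrow> ('x \<Rightarrow> 'y) \<Rightarrow> bool" where
  "blin smX smY f \<longleftrightarrow> (\<forall>x y. f (x + y) = f x + f y) \<and> (\<forall>b x. f (smX b x) = smY b (f x))"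

definition bimap :: "('b::ring_1 \<Rightarrow> 'x::ab_group_add \<Rightarrow> 'x) \<Rightarrow> ('x \<Rightarrow> 'b \<Rightarrow> 'x)
     \<Rightarrow> ('b \<Rightarrow> 'y::ab_group_add \<Rightarrow> 'y) \<Rightarrow> ('y \<Rightarrow> 'b \<Rightarrow> 'y) \<Rightarrow> ('x \<Rightarrow> 'y) \<Rightarrow> bool" where
  "bimap lX rX lY rY f \<longleftrightarrow> (\<forall>x y. f (x + y) = f x + f y) \<and>
      (\<forall>b x. f (lX b x) = lY b (f x)) \<and> (\<forall>b x. f (rX x b) = rY (f x) b)"

definition EndB :: "('b::ring_1 \<Rightarrow> 'm::ab_group_add \<Rightarrow> 'm) \<Rightarrow> ('m \<Rightarrow> 'm) set" where
  "EndB sm = {s. blin sm sm s}"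

definition dualM :: "('b::ring_1 \<Rightarrow> 'm::ab_group_add \<Rightarrow> 'm) \<Rightarrow> ('m \<Rightarrow> 'b) set" where
  "dualM sm = {f. blin sm (\<lambda>b c. b * c) f}"

text \<open>The A-B bimodule structure on *M (A = S):  (m)(a f b) = ((m a) f) b,
  i.e.  a f b = (\<lambda>m. f (a m) * b).\<close>

text \<open>The tensor product M \<otimes>_S *M, presented as the free abelian group on
  M \<times> *M (finitely supported integer-valued functions) modulo the subgroup
  generated by the bilinearity and S-balancedness relations
  (m a) \<otimes> f = m \<otimes> (a f).\<close>
definition fsupp :: "('a \<Rightarrow> int) \<Rightarrow> 'a set" where
  "fsupp c = {p. c p \<noteq> 0}"

definition delta :: "'a \<Rightarrow> 'a \<Rightarrow> int" where
  "delta p = (\<lambda>q. if q = p then 1 else 0)"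

definition freeT :: "('b::ring_1 \<Rightarrow> 'm::ab_group_add \<Rightarrow> 'm) \<Rightarrow> (('m \<times> ('m \<Rightarrow> 'b)) \<Rightarrow> int) set" where
  "freeT sm = {c. finite (fsupp c) \<and> (\<forall>p\<in>fsupp c. snd p \<in> dualM sm)}"

definition relgens :: "('b::ring_1 \<Rightarrow> 'm::ab_group_add \<Rightarrow> 'm) \<Rightarrow> (('m \<times> ('m \<Rightarrow> 'b)) \<Rightarrow> int) set" where
  "relgens sm =
     {delta (x + y, f) - delta (x, f) - delta (y, f) | x y f. f \<in> dualM sm} \<union>
     {delta (x, f + g) - delta (x, f) - delta (x, g) | x f g. f \<in> dualM sm \<and> g \<in> dualM sm} \<union>
     {delta (s x, f) - delta (x, f \<circ> s) | x f s. f \<in> dualM sm \<and> s \<in> EndB sm}"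

definition relsub :: "('b::ring_1 \<Rightarrow> 'm::ab_group_add \<Rightarrow> 'm) \<Rightarrow> (('m \<times> ('m \<Rightarrow> 'b)) \<Rightarrow> int) set" where
  "relsub sm = {c. \<exists>gs :: (int \<times> (('m \<times> ('m \<Rightarrow> 'b)) \<Rightarrow> int)) list.
                   set (map snd gs) \<subseteq> relgens sm \<and> c = (\<lambda>p. \<Sum>(k, g)\<leftarrow>gs. k * g p)}"

text \<open>B-bimodule structure on formal sums: b (m \<otimes> f) b' = (b m) \<otimes> (f b').\<close>
definition tlact :: "('b::ring_1 \<Rightarrow> 'm::ab_group_add \<Rightarrow> 'm) \<Rightarrow> 'b
                      \<Rightarrow> (('m \<times> ('m \<Rightarrow> 'b)) \<Rightarrow> int) \<Rightarrow> (('m \<times> ('m \<Rightarrow> 'b)) \<Rightarrow> int)" where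
  "tlact sm b c = (\<lambda>q. \<Sum>p\<in>{p\<in>fsupp c. (sm b (fst p), snd p) = q}. c p)"

definition tract :: "(('m \<times> ('m \<Rightarrow> 'b::ring_1)) \<Rightarrow> int) \<Rightarrow> 'b \<Rightarrow> (('m \<times> ('m \<Rightarrow> 'b)) \<Rightarrow> int)" where
  "tract c b = (\<lambda>q. \<Sum>p\<in>{p\<in>fsupp c. (fst p, \<lambda>x. snd p x * b) = q}. c p)"

text \<open>ev_M : M \<otimes>_S *M \<rightarrow> B,  m \<otimes> f \<mapsto> (m)f  (on representatives; it vanishes on relsub).\<close>
definition evM :: "(('m \<times> ('m \<Rightarrow> 'b::ring_1)) \<Rightarrow> int) \<Rightarrow> 'b" where
  "evM c = (\<Sum>p\<in>fsupp c. of_int (c p) * snd p (fst p))"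

text \<open>Representatives of Ker(ev_M); Ker(ev_M) itself is kerev / relsub.\<close>
definition kerev :: "('b::ring_1 \<Rightarrow> 'm::ab_group_add \<Rightarrow> 'm) \<Rightarrow> (('m \<times> ('m \<Rightarrow> 'b)) \<Rightarrow> int) set" where
  "kerev sm = {c \<in> freeT sm. evM c = 0}"

definition kermap :: "('b::ring_1 \<Rightarrow> 'm::ab_group_add \<Rightarrow> 'm)
     \<Rightarrow> ('b \<Rightarrow> 'y::ab_group_add \<Rightarrow> 'y) \<Rightarrow> ('y \<Rightarrow> 'b \<Rightarrow> 'y)
     \<Rightarrow> ((('m \<times> ('m \<Rightarrow> 'b)) \<Rightarrow> int) \<Rightarrow> 'y) \<Rightarrow> bool" where
  "kermap sm lY rY p \<longleftrightarrow>
     (\<forall>c\<in>relsub sm. p c = 0) \<and>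
     (\<forall>c\<in>kerev sm. \<forall>d\<in>kerev sm. p (c + d) = p c + p d) \<and>
     (\<forall>b. \<forall>c\<in>kerev sm. p (tlact sm b c) = lY b (p c)) \<and>
     (\<forall>b. \<forall>c\<in>kerev sm. p (tract c b) = rY (p c) b)"

text \<open>The class E_{M,B}: B-bimodule maps f : Y \<rightarrow> Y' such that
  Hom_B(M,f) : Hom_B(M,Y) \<rightarrow> Hom_B(M,Y'), g \<mapsto> f \<circ> g, has a right inverse
  which is an A-B bimodule map.  The A-B structure on Hom_B(M,Y) is
  (m)(a g b) = ((m a) g) b, i.e. a g b = (\<lambda>m. rY (g (a m)) b).\<close>
definition E_class :: "('b::ring_1 \<Rightarrow> 'm::ab_group_add \<Rightarrow> 'm)
     \<Rightarrow> ('b \<Rightarrow> 'y::ab_group_add \<Rightarrow> 'y) \<Rightarrow> ('y \<Rightarrow> 'b \<Rightarrow> 'y)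
     \<Rightarrow> ('b \<Rightarrow> 'z::ab_group_add \<Rightarrow> 'z) \<Rightarrow> ('z \<Rightarrow> 'b \<Rightarrow> 'z) \<Rightarrow> ('y \<Rightarrow> 'z) \<Rightarrow> bool" where
  "E_class sm lY rY lZ rZ f \<longleftrightarrow> bimap lY rY lZ rZ f \<and>
     (\<exists>r :: ('m \<Rightarrow> 'z) \<Rightarrow> ('m \<Rightarrow> 'y).
        (\<forall>h. blin sm lZ h \<longrightarrow> blin sm lY (r h)) \<and>
        (\<forall>h h'. blin sm lZ h \<longrightarrow> blin sm lZ h' \<longrightarrow> r (h + h') = r h + r h') \<and>
        (\<forall>h a. blin sm lZ h \<longrightarrow> a \<in> EndB sm \<longrightarrow> r (h \<circ> a) = r h \<circ> a) \<and>
        (\<forall>h b. blin sm lZ h \<longrightarrow> r (\<lambda>m. rZ (h m) b) = (\<lambda>m. rY (r h m) b)) \<and>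
        (\<forall>h. blin sm lZ h \<longrightarrow> f \<circ> r h = h))"

text \<open>M is a formally smooth B-S bimodule: Ker(ev_M) is E_{M,B}-projective.
  The B-bimodules Y, Y' range over arbitrary types 'y, 'z (type variables are
  universally quantified at the level of the theorem).\<close>
definition formally_smooth :: "('b::ring_1 \<Rightarrow> 'm::ab_group_add \<Rightarrow> 'm)
     \<Rightarrow> ('b \<Rightarrow> 'y::ab_group_add \<Rightarrow> 'y) \<Rightarrow> ('y \<Rightarrow> 'b \<Rightarrow> 'y)
     \<Rightarrow> ('b \<Rightarrow> 'z::ab_group_add \<Rightarrow> 'z) \<Rightarrow> ('z \<Rightarrow> 'b \<Rightarrow> 'z) \<Rightarrow> bool" where
  "formally_smooth sm lY rY lZ rZ \<longleftrightarrow>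
     (\<forall>f p. bimod lY rY \<longrightarrow> bimod lZ rZ \<longrightarrow> E_class sm lY rY lZ rZ f \<longrightarrow> kermap sm lZ rZ p \<longrightarrow>
        (\<exists>q. kermap sm lY rY q \<and> (\<forall>c\<in>kerev sm. f (q c) = p c)))"

text \<open>sigma[M]: modules U/K with K \<subseteq> U \<subseteq> M^(\<nat>) submodules (subquotients of
  direct sums of copies of M).  M generates U/K iff U/K is the sum of the images of
  all B-linear maps M \<rightarrow> U/K; such maps are given by lifts h : M \<rightarrow> U that are
  linear modulo K.\<close>
definition dsumM :: "(nat \<Rightarrow> 'm::ab_group_add) set" where
  "dsumM = {v. finite {i. v i \<noteq> 0}}"

definition vsm :: "('b \<Rightarrow> 'm \<Rightarrow> 'm) \<Rightarrow> 'b \<Rightarrow> (nat \<Rightarrow> 'm) \<Rightarrow> (nat \<Rightarrow> 'm)" where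
  "vsm sm b v = (\<lambda>i. sm b (v i))"

definition dsubmod :: "('b::ring_1 \<Rightarrow> 'm::ab_group_add \<Rightarrow> 'm) \<Rightarrow> (nat \<Rightarrow> 'm) set \<Rightarrow> bool" where
  "dsubmod sm U \<longleftrightarrow> U \<subseteq> dsumM \<and> 0 \<in> U \<and>
     (\<forall>u\<in>U. \<forall>v\<in>U. u + v \<in> U) \<and> (\<forall>b. \<forall>u\<in>U. vsm sm b u \<in> U)"

definition homq :: "('b::ring_1 \<Rightarrow> 'm::ab_group_add \<Rightarrow> 'm) \<Rightarrow> (nat \<Rightarrow> 'm) set \<Rightarrow> (nat \<Rightarrow> 'm) set
                     \<Rightarrow> ('m \<Rightarrow> (nat \<Rightarrow> 'm)) \<Rightarrow> bool" where
  "homq sm U K h \<longleftrightarrow> (\<forall>x. h x \<in> U) \<and> (\<forall>x y. h (x + y) - h x - h y \<in> K) \<and>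
                     (\<forall>b x. h (sm b x) - vsm sm b (h x) \<in> K)"

definition generates_sigma :: "('b::ring_1 \<Rightarrow> 'm::ab_group_add \<Rightarrow> 'm) \<Rightarrow> bool" where
  "generates_sigma sm \<longleftrightarrow>
     (\<forall>U K. dsubmod sm U \<longrightarrow> dsubmod sm K \<longrightarrow> K \<subseteq> U \<longrightarrow>
        (\<forall>u\<in>U. \<exists>hs :: (('m \<Rightarrow> (nat \<Rightarrow> 'm)) \<times> 'm) list.
            (\<forall>(h, x)\<in>set hs. homq sm U K h) \<and> u - (\<Sum>(h, x)\<leftarrow>hs. h x) \<in> K))"

end

theory Submission
  imports Defs
begin


lemma sum_fun_apply: "(sum f A) x = (\<Sum>a\<in>A. f a x)"
  by (induction A rule: infinite_finite_induct) auto

lemma sum_list_fun_apply: "(sum_list xs) x = sum_list (map (\<lambda>f. f x) xs)"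
  by (induction xs) auto

lemma sum_hom:
  assumes "\<forall>x\<in>S. \<forall>y\<in>S. F (x+y) = F x + F y" "\<forall>x\<in>S. \<forall>y\<in>S. x+y\<in>S" "0\<in>S" "F 0 = 0"
    "\<forall>i\<in>A. f i \<in> S"
  shows "F (sum f A) = (\<Sum>i\<in>A. F (f i)) \<and> sum f A \<in> S"
  using assms(5)
proof (induction A rule: infinite_finite_induct)
  case (insert x F)
  then show ?case using assms(1,2) by auto
qed (use assms in auto)

lemma sum_hom_eq:
  assumes "\<forall>x\<in>S. \<forall>y\<in>S. F (x+y) = F x + F y" "\<forall>x\<in>S. \<forall>y\<in>S. x+y\<in>S" "0\<in>S" "F 0 = 0"
    "\<forall>i\<in>A. f i \<in> S"
  shows "F (sum f A) = (\<Sum>i\<in>A. F (f i))"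
  using sum_hom[OF assms] by simp

lemma sum_closed:
  assumes "\<forall>x\<in>S. \<forall>y\<in>S. x+y\<in>S" "0\<in>S" "\<forall>i\<in>A. f i \<in> S"
  shows "sum f A \<in> S"
  using sum_hom[of S id, OF _ assms(1,2) _ assms(3)] by simp

lemma sum_list_hom:
  assumes "\<forall>x\<in>S. \<forall>y\<in>S. F (x+y) = F x + F y" "\<forall>x\<in>S. \<forall>y\<in>S. x+y\<in>S" "0\<in>S" "F 0 = 0"
    "\<forall>i\<in>set xs. f i \<in> S"
  shows "F (\<Sum>i\<leftarrow>xs. f i) = (\<Sum>i\<leftarrow>xs. F (f i)) \<and> (\<Sum>i\<leftarrow>xs. f i) \<in> S"
  using assms(5)
  by (induction xs) (use assms in auto)

definition smul :: "int \<Rightarrow> ('a \<Rightarrow> int) \<Rightarrow> ('a \<Rightarrow> int)" where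
  "smul k c = (\<lambda>q. k * c q)"

definition push :: "('a \<Rightarrow> 'a) \<Rightarrow> ('a \<Rightarrow> int) \<Rightarrow> ('a \<Rightarrow> int)" where
  "push F c = (\<lambda>q. \<Sum>p\<in>{p\<in>fsupp c. F p = q}. c p)"

definition fin :: "('a \<Rightarrow> int) set" where "fin = {c. finite (fsupp c)}"

lemma tlact_push: "tlact sm b c = push (\<lambda>p. (sm b (fst p), snd p)) c"
  by (simp add: tlact_def push_def)
lemma tract_push: "tract c b = push (\<lambda>p. (fst p, \<lambda>x. snd p x * b)) c"
  by (simp add: tract_def push_def)

lemma fsupp_add: "fsupp (c + d) \<subseteq> fsupp c \<union> fsupp d"
  by (auto simp: fsupp_def)
lemma fsupp_uminus[simp]: "fsupp (- c) = fsupp c"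
  by (auto simp: fsupp_def)
lemma fsupp_diff: "fsupp (c - d) \<subseteq> fsupp c \<union> fsupp d"
  by (auto simp: fsupp_def)
lemma fsupp_delta[simp]: "fsupp (delta p) = {p}"
  by (auto simp: fsupp_def delta_def)
lemma fsupp_smul: "fsupp (smul k c) \<subseteq> fsupp c"
  by (auto simp: fsupp_def smul_def)
lemma fsupp_zero[simp]: "fsupp 0 = {}"
  by (auto simp: fsupp_def)

lemma fin_add[intro]: "c \<in> fin \<Longrightarrow> d \<in> fin \<Longrightarrow> c + d \<in> fin"
  unfolding fin_def using fsupp_add by (metis finite_Un finite_subset mem_Collect_eq)
lemma fin_diff[intro]: "c \<in> fin \<Longrightarrow> d \<in> fin \<Longrightarrow> c - d \<in> fin"
  unfolding fin_def using fsupp_diff by (metis finite_Un finite_subset mem_Collect_eq)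
lemma fin_uminus[intro]: "c \<in> fin \<Longrightarrow> - c \<in> fin"
  unfolding fin_def by simp
lemma fin_delta[intro,simp]: "delta p \<in> fin"
  unfolding fin_def by simp
lemma fin_zero[intro,simp]: "0 \<in> fin"
  unfolding fin_def by simp
lemma fin_smul[intro]: "c \<in> fin \<Longrightarrow> smul k c \<in> fin"
  unfolding fin_def using fsupp_smul by (metis finite_subset mem_Collect_eq)

lemma push_alt:
  assumes "finite A" "fsupp c \<subseteq> A"
  shows "push F c q = (\<Sum>p\<in>{p\<in>A. F p = q}. c p)"
  unfolding push_def
  by (rule sum.mono_neutral_left) (use assms in \<open>auto simp: fsupp_def\<close>)

lemma push_add:
  assumes "c \<in> fin" "d \<in> fin"
  shows "push F (c + d) = push F c + push F d"
proof
  fix q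
  let ?A = "fsupp c \<union> fsupp d"
  have f: "finite ?A" using assms by (auto simp: fin_def)
  have "push F (c + d) q = (\<Sum>p\<in>{p\<in>?A. F p = q}. (c + d) p)"
    by (rule push_alt[OF f]) (use fsupp_add[of c d] in auto)
  also have "\<dots> = (\<Sum>p\<in>{p\<in>?A. F p = q}. c p) + (\<Sum>p\<in>{p\<in>?A. F p = q}. d p)"
    by (simp add: sum.distrib)
  also have "\<dots> = push F c q + push F d q"
    using push_alt[OF f, of c F q] push_alt[OF f, of d F q] by auto
  finally show "push F (c + d) q = (push F c + push F d) q" by simp
qed

lemma push_uminus: "push F (- c) = - push F c"
  by (auto simp: push_def sum_negf)

lemma push_diff:
  assumes "c \<in> fin" "d \<in> fin"
  shows "push F (c - d) = push F c - push F d"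
  using push_add[of c "-d" F] push_uminus[of F d] assms by (simp add: fin_uminus)

lemma push_smul: "push F (smul k c) = smul k (push F c)"
proof
  fix q
  show "push F (smul k c) q = smul k (push F c) q"
  proof (cases "k = 0")
    case True then show ?thesis by (simp add: push_def smul_def fsupp_def)
  next
    case False
    then have "fsupp (smul k c) = fsupp c" by (auto simp: fsupp_def smul_def)
    then show ?thesis by (simp add: push_def smul_def sum_distrib_left)
  qed
qed

lemma push_delta: "push F (delta p) = delta (F p)"
proof -
  have "{pa \<in> fsupp (delta p). F pa = q} = (if F p = q then {p} else {})" for q by auto
  then show ?thesis by (auto simp: push_def delta_def fun_eq_iff)
qed

lemma push_zero[simp]: "push F 0 = 0"
  by (auto simp: push_def fun_eq_iff)

lemma fsupp_push: "fsupp (push F c) \<subseteq> F ` fsupp c"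
proof
  fix q assume "q \<in> fsupp (push F c)"
  then have ne: "push F c q \<noteq> 0" by (simp add: fsupp_def)
  have "{p\<in>fsupp c. F p = q} \<noteq> {}"
  proof
    assume "{p\<in>fsupp c. F p = q} = {}"
    then have "push F c q = 0" unfolding push_def by (simp only: sum.empty)
    with ne show False by simp
  qed
  then show "q \<in> F ` fsupp c" by auto
qed

lemma fin_push[intro]: "c \<in> fin \<Longrightarrow> push F c \<in> fin"
  unfolding fin_def using fsupp_push by (metis finite_imageI finite_subset mem_Collect_eq)

lemma expand:
  assumes "c \<in> fin"
  shows "c = (\<Sum>p\<in>fsupp c. smul (c p) (delta p))"
proof
  fix q
  have "(\<Sum>p\<in>fsupp c. smul (c p) (delta p)) q = (\<Sum>p\<in>fsupp c. c p * delta p q)"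
    by (simp add: sum_fun_apply smul_def)
  also have "\<dots> = (\<Sum>p\<in>fsupp c \<inter> {q}. c p)"
    using assms unfolding fin_def
    by (intro sum.mono_neutral_cong_right) (auto simp: delta_def)
  also have "\<dots> = c q" by (cases "q \<in> fsupp c") (auto simp: fsupp_def)
  finally show "c q = (\<Sum>p\<in>fsupp c. smul (c p) (delta p)) q" by simp
qed

lemma fin_sum[intro]: "\<forall>i\<in>A. f i \<in> fin \<Longrightarrow> sum f A \<in> fin"
  by (rule sum_closed) auto

lemma lin_expand:
  fixes L :: "('a \<Rightarrow> int) \<Rightarrow> 'c::ab_group_add"
  assumes add: "\<forall>c\<in>fin. \<forall>d\<in>fin. L (c + d) = L c + L d"
    and sm: "\<forall>k c. c \<in> fin \<longrightarrow> L (smul k c) = S k (L c)"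
    and c: "c \<in> fin"
  shows "L c = (\<Sum>p\<in>fsupp c. S (c p) (L (delta p)))"
proof -
  have L0: "L 0 = 0" using add[rule_format, of 0 0] by simp
  have "L c = L (\<Sum>p\<in>fsupp c. smul (c p) (delta p))" using expand[OF c] by simp
  also have "\<dots> = (\<Sum>p\<in>fsupp c. L (smul (c p) (delta p)))"
    by (rule sum_hom_eq[where S=fin]) (use add L0 in blast)+
  also have "\<dots> = (\<Sum>p\<in>fsupp c. S (c p) (L (delta p)))"
    using sm by simp
  finally show ?thesis .
qed

lemma push_comp:
  assumes "c \<in> fin"
  shows "push G (push F c) = push (G \<circ> F) c"
proof -
  have "push G (push F c) = (\<Sum>p\<in>fsupp c. smul (c p) (push G (push F (delta p))))"
    by (rule lin_expand[OF _ _ assms]) (metis push_add fin_push, simp add: push_smul)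
  also have "\<dots> = (\<Sum>p\<in>fsupp c. smul (c p) (push (G \<circ> F) (delta p)))"
    by (simp add: push_delta)
  also have "\<dots> = push (G \<circ> F) c"
    by (rule lin_expand[symmetric, OF _ _ assms]) (metis push_add fin_push, simp add: push_smul)
  finally show ?thesis .
qed

definition E :: "('m \<times> ('m \<Rightarrow> 'b)) \<Rightarrow> 'b" where "E p = snd p (fst p)"

lemma evM_alt:
  assumes "finite A" "fsupp c \<subseteq> A"
  shows "evM c = (\<Sum>p\<in>A. of_int (c p) * E p)"
  unfolding evM_def E_def
  by (rule sum.mono_neutral_left) (use assms in \<open>auto simp: fsupp_def\<close>)

lemma evM_add:
  assumes "c \<in> fin" "d \<in> fin"
  shows "evM (c + d) = evM c + evM d"
proof -
  let ?A = "fsupp c \<union> fsupp d"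
  have f: "finite ?A" using assms by (auto simp: fin_def)
  have "evM (c + d) = (\<Sum>p\<in>?A. of_int ((c+d) p) * E p)"
    by (rule evM_alt[OF f]) (use fsupp_add[of c d] in auto)
  also have "\<dots> = (\<Sum>p\<in>?A. of_int (c p) * E p) + (\<Sum>p\<in>?A. of_int (d p) * E p)"
    by (simp add: sum.distrib distrib_right)
  also have "\<dots> = evM c + evM d"
    using evM_alt[OF f, of c] evM_alt[OF f, of d] by auto
  finally show ?thesis .
qed

lemma evM_smul: "evM (smul k c) = of_int k * evM c"
proof (cases "k = 0")
  case True then show ?thesis by (simp add: evM_def smul_def fsupp_def)
next
  case False
  then have "fsupp (smul k c) = fsupp c" by (auto simp: fsupp_def smul_def)
  then show ?thesis by (simp add: evM_def smul_def sum_distrib_left mult.assoc)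
qed

lemma evM_delta: "evM (delta p) = E p"
  by (simp add: evM_def E_def) (simp add: delta_def)

lemma evM_push:
  assumes "c \<in> fin"
  shows "evM (push F c) = (\<Sum>p\<in>fsupp c. of_int (c p) * E (F p))"
proof -
  have "evM (push F c) = (\<Sum>p\<in>fsupp c. of_int (c p) * evM (push F (delta p)))"
    by (rule lin_expand[OF _ _ assms]) (metis push_add fin_push evM_add, simp add: push_smul evM_smul)
  then show ?thesis by (simp add: push_delta evM_delta)
qed


lemma relsub_conv: "(\<lambda>p. \<Sum>(k, g)\<leftarrow>gs. k * g p) = (\<Sum>(k, g)\<leftarrow>gs. smul k g)"
  by (induction gs) (auto simp: smul_def fun_eq_iff)

lemma lmod_simps:
  assumes "lmod sm"
  shows "sm b (x + y) = sm b x + sm b y" "sm b 0 = 0" "sm b (- x) = - sm b x"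
    "sm b (x - y) = sm b x - sm b y" "sm (a * b) x = sm a (sm b x)" "sm 1 x = x"
proof -
  have h: "\<And>u v. sm b (u + v) = sm b u + sm b v" using assms by (simp add: lmod_def)
  show "sm b (x + y) = sm b x + sm b y" by (rule h)
  show 2: "sm b 0 = 0" using h[of 0 0] by simp
  have 3: "sm b (- u) = - sm b u" for u using h[of u "-u"] 2 by (metis add.right_inverse minus_unique)
  show "sm b (- x) = - sm b x" by (rule 3)
  show "sm b (x - y) = sm b x - sm b y" using h[of x "-y"] 3[of y] by simp
  show "sm (a * b) x = sm a (sm b x)" "sm 1 x = x" using assms by (simp_all add: lmod_def)
qed

lemma addhom_simps:
  fixes f :: "'a::ab_group_add \<Rightarrow> 'c::ab_group_add"
  assumes "\<forall>x y. f (x + y) = f x + f y"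
  shows "f 0 = 0" "f (- x) = - f x" "f (x - y) = f x - f y"
proof -
  have h: "\<And>a b. f (a + b) = f a + f b" using assms by blast
  show 2: "f 0 = 0" using h[of 0 0] by simp
  show 3: "f (- x) = - f x" for x using h[of x "-x"] 2 by (metis add.right_inverse minus_unique)
  show "f (x - y) = f x - f y" using h[of x "-y"] 3[of y] by simp
qed

context
  fixes sm :: "'b::ring_1 \<Rightarrow> 'm::ab_group_add \<Rightarrow> 'm"
  assumes lm: "lmod sm"
begin

lemma dual_add: "f \<in> dualM sm \<Longrightarrow> f (x + y) = f x + f y"
  by (simp add: dualM_def blin_def)
lemma dual_sm: "f \<in> dualM sm \<Longrightarrow> f (sm b x) = b * f x"
  by (simp add: dualM_def blin_def)
lemma dual_plus: "f \<in> dualM sm \<Longrightarrow> g \<in> dualM sm \<Longrightarrow> f + g \<in> dualM sm"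
  by (simp add: dualM_def blin_def algebra_simps)
lemma dual_comp: "f \<in> dualM sm \<Longrightarrow> s \<in> EndB sm \<Longrightarrow> f \<circ> s \<in> dualM sm"
  by (simp add: dualM_def EndB_def blin_def)
lemma dual_r: "f \<in> dualM sm \<Longrightarrow> (\<lambda>x. f x * b) \<in> dualM sm"
  by (simp add: dualM_def blin_def algebra_simps)
lemma endB_sm: "s \<in> EndB sm \<Longrightarrow> s (sm b x) = sm b (s x)"
  by (simp add: EndB_def blin_def)

lemma freeT_iff: "c \<in> freeT sm \<longleftrightarrow> c \<in> fin \<and> (\<forall>p\<in>fsupp c. snd p \<in> dualM sm)"
  by (simp add: freeT_def fin_def)

lemma freeT_add: "c \<in> freeT sm \<Longrightarrow> d \<in> freeT sm \<Longrightarrow> c + d \<in> freeT sm"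
  unfolding freeT_iff using fsupp_add[of c d] by blast
lemma freeT_uminus: "c \<in> freeT sm \<Longrightarrow> - c \<in> freeT sm"
  unfolding freeT_iff by auto
lemma freeT_diff: "c \<in> freeT sm \<Longrightarrow> d \<in> freeT sm \<Longrightarrow> c - d \<in> freeT sm"
  unfolding freeT_iff using fsupp_diff[of c d] by blast
lemma freeT_smul: "c \<in> freeT sm \<Longrightarrow> smul k c \<in> freeT sm"
  unfolding freeT_iff using fsupp_smul[of k c] by blast
lemma freeT_zero: "0 \<in> freeT sm"
  unfolding freeT_iff by simp
lemma freeT_delta: "snd p \<in> dualM sm \<Longrightarrow> delta p \<in> freeT sm"
  unfolding freeT_iff by simp
lemma freeT_push: "c \<in> freeT sm \<Longrightarrow> (\<And>p. snd p \<in> dualM sm \<Longrightarrow> snd (F p) \<in> dualM sm) \<Longrightarrow> push F c \<in> freeT sm"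
  unfolding freeT_iff using fsupp_push[of F c] by blast

lemma KE_iff: "c \<in> kerev sm \<longleftrightarrow> c \<in> freeT sm \<and> evM c = 0"
  by (simp add: kerev_def)

lemma freeT_fin: "c \<in> freeT sm \<Longrightarrow> c \<in> fin" by (simp add: freeT_iff)
lemma KE_fin: "c \<in> kerev sm \<Longrightarrow> c \<in> fin" by (simp add: KE_iff freeT_iff)

lemma KE_add: "c \<in> kerev sm \<Longrightarrow> d \<in> kerev sm \<Longrightarrow> c + d \<in> kerev sm"
  by (simp add: KE_iff freeT_add evM_add freeT_fin)
lemma KE_smul: "c \<in> kerev sm \<Longrightarrow> smul k c \<in> kerev sm"
  by (simp add: KE_iff freeT_smul evM_smul)
lemma KE_uminus: "c \<in> kerev sm \<Longrightarrow> - c \<in> kerev sm"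
proof -
  assume c: "c \<in> kerev sm"
  have "- c = smul (-1) c" by (simp add: smul_def fun_eq_iff)
  then show ?thesis using KE_smul[OF c, of "-1"] by simp
qed
lemma KE_diff: "c \<in> kerev sm \<Longrightarrow> d \<in> kerev sm \<Longrightarrow> c - d \<in> kerev sm"
  using KE_add[of c "-d"] KE_uminus[of d] by simp
lemma KE_zero: "0 \<in> kerev sm"
  by (simp add: KE_iff freeT_zero evM_def)

lemma RS_add: "c \<in> relsub sm \<Longrightarrow> d \<in> relsub sm \<Longrightarrow> c + d \<in> relsub sm"
proof -
  assume "c \<in> relsub sm" "d \<in> relsub sm"
  then obtain gs hs where g: "set (map snd gs) \<subseteq> relgens sm" "c = (\<lambda>p. \<Sum>(k, g)\<leftarrow>gs. k * g p)"
    and h: "set (map snd hs) \<subseteq> relgens sm" "d = (\<lambda>p. \<Sum>(k, g)\<leftarrow>hs. k * g p)"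
    unfolding relsub_def by blast
  then show ?thesis unfolding relsub_def
    by (intro CollectI exI[of _ "gs @ hs"]) (auto simp: fun_eq_iff)
qed

lemma RS_smul: "c \<in> relsub sm \<Longrightarrow> smul k c \<in> relsub sm"
proof -
  assume "c \<in> relsub sm"
  then obtain gs where g: "set (map snd gs) \<subseteq> relgens sm" "c = (\<lambda>p. \<Sum>(k, g)\<leftarrow>gs. k * g p)"
    unfolding relsub_def by blast
  have "smul k (\<lambda>p. \<Sum>(k, g)\<leftarrow>gs. k * g p) = (\<lambda>p. \<Sum>(k', g)\<leftarrow>map (\<lambda>(k',g). (k*k', g)) gs. k' * g p)"
    by (induction gs) (auto simp: smul_def fun_eq_iff algebra_simps)
  then show ?thesis using g unfolding relsub_def
    by (intro CollectI exI[of _ "map (\<lambda>(k',g). (k*k', g)) gs"]) auto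
qed

lemma RS_uminus: "c \<in> relsub sm \<Longrightarrow> - c \<in> relsub sm"
proof -
  assume c: "c \<in> relsub sm"
  have "- c = smul (-1) c" by (simp add: smul_def fun_eq_iff)
  then show ?thesis using RS_smul[OF c, of "-1"] by simp
qed
lemma RS_diff: "c \<in> relsub sm \<Longrightarrow> d \<in> relsub sm \<Longrightarrow> c - d \<in> relsub sm"
  using RS_add[of c "-d"] RS_uminus[of d] by simp
lemma RS_zero: "0 \<in> relsub sm"
  unfolding relsub_def by (intro CollectI exI[of _ "[]"]) (auto simp: fun_eq_iff)
lemma RS_gen: "g \<in> relgens sm \<Longrightarrow> g \<in> relsub sm"
  unfolding relsub_def by (intro CollectI exI[of _ "[(1,g)]"]) (auto simp: fun_eq_iff)

lemma RS_induct[consumes 1, case_names zero add gen]: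
  assumes "c \<in> relsub sm" "P 0" "\<And>c d. c \<in> relsub sm \<Longrightarrow> d \<in> relsub sm \<Longrightarrow> P c \<Longrightarrow> P d \<Longrightarrow> P (c + d)"
    "\<And>k g. g \<in> relgens sm \<Longrightarrow> P (smul k g)"
  shows "P c"
proof -
  obtain gs where g: "set (map snd gs) \<subseteq> relgens sm" "c = (\<lambda>p. \<Sum>(k, g)\<leftarrow>gs. k * g p)"
    using assms(1) unfolding relsub_def by blast
  have "P (\<Sum>(k, g)\<leftarrow>gs. smul k g) \<and> (\<Sum>(k, g)\<leftarrow>gs. smul k g) \<in> relsub sm" using g(1)
  proof (induction gs)
    case Nil then show ?case by (simp only: list.map(1) sum_list.Nil) (use assms(2) RS_zero in blast)
  next
    case (Cons a gs)
    obtain k g where a: "a = (k, g)" by fastforce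
    have g: "g \<in> relgens sm" using Cons.prems a by simp
    have IH: "P (\<Sum>(k, g)\<leftarrow>gs. smul k g)" "(\<Sum>(k, g)\<leftarrow>gs. smul k g) \<in> relsub sm"
      using Cons by auto
    have sg: "smul k g \<in> relsub sm" using RS_smul RS_gen g by blast
    have "P (smul k g + (\<Sum>(k, g)\<leftarrow>gs. smul k g))"
      by (rule assms(3)[OF sg IH(2) assms(4)[OF g] IH(1)])
    moreover have "smul k g + (\<Sum>(k, g)\<leftarrow>gs. smul k g) \<in> relsub sm"
      by (rule RS_add[OF sg IH(2)])
    ultimately show ?case unfolding a list.map(2) sum_list.Cons prod.case by blast
  qed
  then show ?thesis using g(2) relsub_conv by metis
qed

lemma gen_cases:
  assumes "g \<in> relgens sm"
  obtains x y f where "f \<in> dualM sm" "g = delta (x + y, f) - delta (x, f) - delta (y, f)"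
  | x f h where "f \<in> dualM sm" "h \<in> dualM sm" "g = delta (x, f + h) - delta (x, f) - delta (x, h)"
  | x f s where "f \<in> dualM sm" "s \<in> EndB sm" "g = delta (s x, f) - delta (x, f \<circ> s)"
  using assms unfolding relgens_def by blast

lemma evM_uminus: "c \<in> fin \<Longrightarrow> evM (- c) = - evM c"
  by (simp add: evM_def sum_negf)

lemma evM_diff: "c \<in> fin \<Longrightarrow> d \<in> fin \<Longrightarrow> evM (c - d) = evM c - evM d"
  using evM_add[of c "-d"] evM_uminus[of d] by (simp add: fin_uminus)

lemma gen_KE: "g \<in> relgens sm \<Longrightarrow> g \<in> kerev sm"
proof (erule gen_cases)
  fix x y f assume f: "f \<in> dualM sm" and g: "g = delta (x + y, f) - delta (x, f) - delta (y, f)"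
  show "g \<in> kerev sm" unfolding g KE_iff
    using f by (simp add: freeT_diff freeT_delta evM_diff fin_diff evM_delta E_def dual_add)
next
  fix x f h assume f: "f \<in> dualM sm" "h \<in> dualM sm" and g: "g = delta (x, f + h) - delta (x, f) - delta (x, h)"
  show "g \<in> kerev sm" unfolding g KE_iff
    using f by (simp add: freeT_diff freeT_delta evM_diff fin_diff evM_delta E_def dual_plus)
next
  fix x f s assume f: "f \<in> dualM sm" "s \<in> EndB sm" and g: "g = delta (s x, f) - delta (x, f \<circ> s)"
  show "g \<in> kerev sm" unfolding g KE_iff
    using f by (simp add: freeT_diff freeT_delta evM_diff fin_diff evM_delta E_def dual_comp)
qed

lemma RS_KE: "c \<in> relsub sm \<Longrightarrow> c \<in> kerev sm"
proof (induction rule: RS_induct)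
  case zero show ?case by (rule KE_zero)
next
  case (add c d) show ?case by (rule KE_add[OF add(3,4)])
next
  case (gen k g) show ?case by (rule KE_smul[OF gen_KE[OF gen]])
qed

lemma RS_fin: "c \<in> relsub sm \<Longrightarrow> c \<in> fin"
  using RS_KE KE_fin by blast

lemma push_RS:
  assumes "\<And>g. g \<in> relgens sm \<Longrightarrow> push F g \<in> relsub sm" "c \<in> relsub sm"
  shows "push F c \<in> relsub sm"
  using assms(2)
proof (induction rule: RS_induct)
  case zero show ?case unfolding push_zero by (rule RS_zero)
next
  case (add c d)
  have "push F (c + d) = push F c + push F d" by (rule push_add[OF RS_fin[OF add(1)] RS_fin[OF add(2)]])
  then show ?case using RS_add[OF add(3) add(4)] by (simp only:)
next
  case (gen k g)
  show ?case unfolding push_smul by (rule RS_smul[OF assms(1)[OF gen]])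
qed


lemma push_gen3: "push F (delta a - delta b - delta c) = delta (F a) - delta (F b) - delta (F c)"
  by (simp add: push_diff fin_diff push_delta)
lemma push_gen2: "push F (delta a - delta b) = delta (F a) - delta (F b)"
  by (simp add: push_diff push_delta)

lemma tlact_RS: "c \<in> relsub sm \<Longrightarrow> tlact sm b c \<in> relsub sm"
  unfolding tlact_push
proof (rule push_RS)
  fix g assume "g \<in> relgens sm"
  then show "push (\<lambda>p. (sm b (fst p), snd p)) g \<in> relsub sm"
  proof (rule gen_cases)
    fix x y f assume f: "f \<in> dualM sm" and g: "g = delta (x + y, f) - delta (x, f) - delta (y, f)"
    have "push (\<lambda>p. (sm b (fst p), snd p)) g = delta (sm b x + sm b y, f) - delta (sm b x, f) - delta (sm b y, f)"
      unfolding g push_gen3 by (simp add: lmod_simps[OF lm])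
    also have "\<dots> \<in> relgens sm" unfolding relgens_def using f by blast
    finally show ?thesis by (rule RS_gen)
  next
    fix x f h assume f: "f \<in> dualM sm" "h \<in> dualM sm" and g: "g = delta (x, f + h) - delta (x, f) - delta (x, h)"
    have "push (\<lambda>p. (sm b (fst p), snd p)) g = delta (sm b x, f + h) - delta (sm b x, f) - delta (sm b x, h)"
      unfolding g push_gen3 by simp
    also have "\<dots> \<in> relgens sm" unfolding relgens_def using f by blast
    finally show ?thesis by (rule RS_gen)
  next
    fix x f s assume f: "f \<in> dualM sm" "s \<in> EndB sm" and g: "g = delta (s x, f) - delta (x, f \<circ> s)"
    have "push (\<lambda>p. (sm b (fst p), snd p)) g = delta (s (sm b x), f) - delta (sm b x, f \<circ> s)"
      unfolding g push_gen2 using f by (simp add: endB_sm)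
    also have "\<dots> \<in> relgens sm" unfolding relgens_def using f by blast
    finally show ?thesis by (rule RS_gen)
  qed
qed

lemma tract_RS: "c \<in> relsub sm \<Longrightarrow> tract c b \<in> relsub sm"
  unfolding tract_push
proof (rule push_RS)
  fix g assume "g \<in> relgens sm"
  then show "push (\<lambda>p. (fst p, \<lambda>x. snd p x * b)) g \<in> relsub sm"
  proof (rule gen_cases)
    fix x y f assume f: "f \<in> dualM sm" and g: "g = delta (x + y, f) - delta (x, f) - delta (y, f)"
    have "push (\<lambda>p. (fst p, \<lambda>x. snd p x * b)) g = delta (x + y, \<lambda>x. f x * b) - delta (x, \<lambda>x. f x * b) - delta (y, \<lambda>x. f x * b)"
      unfolding g push_gen3 by simp
    also have "\<dots> \<in> relgens sm" unfolding relgens_def using dual_r[OF f] by blast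
    finally show ?thesis by (rule RS_gen)
  next
    fix x f h assume f: "f \<in> dualM sm" "h \<in> dualM sm" and g: "g = delta (x, f + h) - delta (x, f) - delta (x, h)"
    have e: "(\<lambda>y. (f y + h y) * b) = (\<lambda>x. f x * b) + (\<lambda>x. h x * b)" by (simp add: fun_eq_iff algebra_simps)
    have "push (\<lambda>p. (fst p, \<lambda>x. snd p x * b)) g = delta (x, (\<lambda>x. f x * b) + (\<lambda>x. h x * b)) - delta (x, \<lambda>x. f x * b) - delta (x, \<lambda>x. h x * b)"
      unfolding g push_gen3 by (simp add: e)
    also have "\<dots> \<in> relgens sm" unfolding relgens_def using dual_r[OF f(1)] dual_r[OF f(2)] by blast
    finally show ?thesis by (rule RS_gen)
  next
    fix x f s assume f: "f \<in> dualM sm" "s \<in> EndB sm" and g: "g = delta (s x, f) - delta (x, f \<circ> s)"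
    have e: "(\<lambda>y. f (s y) * b) = (\<lambda>x. f x * b) \<circ> s" by (simp add: fun_eq_iff)
    have "push (\<lambda>p. (fst p, \<lambda>x. snd p x * b)) g = delta (s x, \<lambda>x. f x * b) - delta (x, (\<lambda>x. f x * b) \<circ> s)"
      unfolding g push_gen2 by (simp add: e)
    also have "\<dots> \<in> relgens sm" unfolding relgens_def using dual_r[OF f(1)] f(2) by blast
    finally show ?thesis by (rule RS_gen)
  qed
qed

lemma tlact_KE: "c \<in> kerev sm \<Longrightarrow> tlact sm b c \<in> kerev sm"
proof -
  assume c: "c \<in> kerev sm"
  have fr: "tlact sm b c \<in> freeT sm" unfolding tlact_push
    by (rule freeT_push) (use c in \<open>auto simp: KE_iff\<close>)
  have "evM (tlact sm b c) = (\<Sum>p\<in>fsupp c. of_int (c p) * E (sm b (fst p), snd p))"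
    unfolding tlact_push by (rule evM_push[OF KE_fin[OF c]])
  also have "\<dots> = (\<Sum>p\<in>fsupp c. b * (of_int (c p) * E p))"
  proof (rule sum.cong)
    fix p assume "p \<in> fsupp c"
    then have "snd p \<in> dualM sm" using c by (auto simp: KE_iff freeT_iff)
    then have "E (sm b (fst p), snd p) = b * E p" by (simp add: E_def dual_sm)
    moreover have "of_int k * (b * v) = b * (of_int k * v)" for k and v :: 'b
      by (metis mult.assoc mult_of_int_commute)
    ultimately show "of_int (c p) * E (sm b (fst p), snd p) = b * (of_int (c p) * E p)"
      by simp
  qed simp
  also have "\<dots> = b * evM c" by (simp add: evM_def E_def sum_distrib_left)
  also have "\<dots> = 0" using c by (simp add: KE_iff)
  finally show ?thesis using fr by (simp add: KE_iff)
qed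

lemma tract_KE: "c \<in> kerev sm \<Longrightarrow> tract c b \<in> kerev sm"
proof -
  assume c: "c \<in> kerev sm"
  have fr: "tract c b \<in> freeT sm" unfolding tract_push
    by (rule freeT_push) (use c dual_r in \<open>auto simp: KE_iff\<close>)
  have "evM (tract c b) = (\<Sum>p\<in>fsupp c. of_int (c p) * E (fst p, \<lambda>x. snd p x * b))"
    unfolding tract_push by (rule evM_push[OF KE_fin[OF c]])
  also have "\<dots> = (\<Sum>p\<in>fsupp c. (of_int (c p) * E p) * b)"
    by (simp add: E_def mult.assoc)
  also have "\<dots> = evM c * b" by (simp add: evM_def E_def sum_distrib_right)
  also have "\<dots> = 0" using c by (simp add: KE_iff)
  finally show ?thesis using fr by (simp add: KE_iff)
qed

lemma tl_tr_comm: "c \<in> fin \<Longrightarrow> tlact sm b' (tract c b) = tract (tlact sm b' c) b"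
  unfolding tlact_push tract_push by (simp add: push_comp o_def)

lemma tlact_add: "c \<in> fin \<Longrightarrow> d \<in> fin \<Longrightarrow> tlact sm b (c + d) = tlact sm b c + tlact sm b d"
  unfolding tlact_push by (rule push_add)
lemma tlact_diff: "c \<in> fin \<Longrightarrow> d \<in> fin \<Longrightarrow> tlact sm b (c - d) = tlact sm b c - tlact sm b d"
  unfolding tlact_push by (rule push_diff)
lemma tract_add: "c \<in> fin \<Longrightarrow> d \<in> fin \<Longrightarrow> tract (c + d) b = tract c b + tract d b"
  unfolding tract_push by (rule push_add)
lemma tract_diff: "c \<in> fin \<Longrightarrow> d \<in> fin \<Longrightarrow> tract (c - d) b = tract c b - tract d b"
  unfolding tract_push by (rule push_diff)
lemma tlact_zero: "tlact sm b 0 = 0" unfolding tlact_push by simp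
lemma tract_zero: "tract 0 b = 0" unfolding tract_push by simp

end



lemma list_sum_idx: "(\<Sum>(g,x)\<leftarrow>R. F g x) = (\<Sum>j<length R. F (fst (R!j)) (snd (R!j)))"
proof -
  have "(\<Sum>(g,x)\<leftarrow>R. F g x) = (\<Sum>j = 0..<length (map (\<lambda>(g,x). F g x) R). map (\<lambda>(g,x). F g x) R ! j)"
    by (rule sum_list_sum_nth)
  also have "\<dots> = (\<Sum>j = 0..<length R. map (\<lambda>(g,x). F g x) R ! j)" by simp
  also have "\<dots> = (\<Sum>j<length R. F (fst (R!j)) (snd (R!j)))"
    by (rule sum.cong) (auto simp: case_prod_beta)
  finally show ?thesis .
qed

lemma sum_hom_eq':
  assumes "\<And>x y. x\<in>S \<Longrightarrow> y\<in>S \<Longrightarrow> F (x+y) = F x + F y" "\<And>x y. x\<in>S \<Longrightarrow> y\<in>S \<Longrightarrow> x+y\<in>S" "0\<in>S" "F 0 = 0"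
    "\<And>i. i\<in>A \<Longrightarrow> f i \<in> S"
  shows "F (sum f A) = (\<Sum>i\<in>A. F (f i))"
  by (rule sum_hom_eq[where S=S]) (use assms in blast)+

definition glin :: "('b::ring_1 \<Rightarrow> 'm::ab_group_add \<Rightarrow> 'm) \<Rightarrow> ('m \<Rightarrow> (('m \<times> ('m \<Rightarrow> 'b)) \<Rightarrow> int)) \<Rightarrow> bool" where
  "glin sm g \<longleftrightarrow> (\<forall>y. g y \<in> kerev sm) \<and> (\<forall>x y. g (x + y) - g x - g y \<in> relsub sm) \<and>
     (\<forall>b x. g (sm b x) - tlact sm b (g x) \<in> relsub sm)"

definition isrep :: "('b::ring_1 \<Rightarrow> 'm::ab_group_add \<Rightarrow> 'm) \<Rightarrow> (('m \<times> ('m \<Rightarrow> 'b)) \<Rightarrow> int) \<Rightarrow> (('m \<Rightarrow> (('m \<times> ('m \<Rightarrow> 'b)) \<Rightarrow> int)) \<times> 'm) list \<Rightarrow> bool" where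
  "isrep sm c R \<longleftrightarrow> (\<forall>(g,x)\<in>set R. glin sm g) \<and> c - (\<Sum>(g,x)\<leftarrow>R. g x) \<in> relsub sm"

lemma blin_add: "blin sX sY h \<Longrightarrow> h (x + y) = h x + h y"
  by (simp add: blin_def)
lemma blin_sm: "blin sX sY h \<Longrightarrow> h (sX b x) = sY b (h x)"
  by (simp add: blin_def)
lemma blin_simps:
  assumes "blin sX sY h"
  shows "h 0 = 0" "h (- x) = - h x" "h (x - y) = h x - h y"
  using addhom_simps[of h] assms by (auto simp: blin_def)
lemma blin_sum: "blin sX sY h \<Longrightarrow> h (sum f A) = (\<Sum>i\<in>A. h (f i))"
  by (rule sum_hom_eq[where S=UNIV]) (auto simp: blin_add blin_simps)
lemma blin_comp: "blin sm sY h \<Longrightarrow> a \<in> EndB sm \<Longrightarrow> blin sm sY (h \<circ> a)"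
  by (simp add: blin_def EndB_def)

context
  fixes sm :: "'b::ring_1 \<Rightarrow> 'm::ab_group_add \<Rightarrow> 'm"
    and lY :: "'b \<Rightarrow> 'y::ab_group_add \<Rightarrow> 'y" and rY :: "'y \<Rightarrow> 'b \<Rightarrow> 'y"
    and lZ :: "'b \<Rightarrow> 'z::ab_group_add \<Rightarrow> 'z" and rZ :: "'z \<Rightarrow> 'b \<Rightarrow> 'z"
    and f :: "'y \<Rightarrow> 'z" and p :: "(('m \<times> ('m \<Rightarrow> 'b)) \<Rightarrow> int) \<Rightarrow> 'z"
    and r :: "('m \<Rightarrow> 'z) \<Rightarrow> ('m \<Rightarrow> 'y)"
  assumes lm: "lmod sm" and gsig: "generates_sigma sm"
    and bY: "bimod lY rY" and bZ: "bimod lZ rZ"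
    and fmap: "bimap lY rY lZ rZ f"
    and r1: "\<And>h. blin sm lZ h \<Longrightarrow> blin sm lY (r h)"
    and r2: "\<And>h h'. blin sm lZ h \<Longrightarrow> blin sm lZ h' \<Longrightarrow> r (h + h') = r h + r h'"
    and r3: "\<And>h a. blin sm lZ h \<Longrightarrow> a \<in> EndB sm \<Longrightarrow> r (h \<circ> a) = r h \<circ> a"
    and r4: "\<And>h b. blin sm lZ h \<Longrightarrow> r (\<lambda>m. rZ (h m) b) = (\<lambda>m. rY (r h m) b)"
    and r5: "\<And>h. blin sm lZ h \<Longrightarrow> f \<circ> r h = h"
    and pk: "kermap sm lZ rZ p"
begin

lemma p_RS: "c \<in> relsub sm \<Longrightarrow> p c = 0"
  using pk by (simp add: kermap_def)
lemma p_add: "c \<in> kerev sm \<Longrightarrow> d \<in> kerev sm \<Longrightarrow> p (c + d) = p c + p d"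
  using pk by (simp add: kermap_def)
lemma p_tl: "c \<in> kerev sm \<Longrightarrow> p (tlact sm b c) = lZ b (p c)"
  using pk by (simp add: kermap_def)
lemma p_tr: "c \<in> kerev sm \<Longrightarrow> p (tract c b) = rZ (p c) b"
  using pk by (simp add: kermap_def)
lemma p0: "p 0 = 0" by (rule p_RS[OF RS_zero[OF lm]])
lemma p_cong: "a \<in> kerev sm \<Longrightarrow> b \<in> kerev sm \<Longrightarrow> a - b \<in> relsub sm \<Longrightarrow> p a = p b"
proof -
  assume a: "a \<in> kerev sm" and b: "b \<in> kerev sm" and d: "a - b \<in> relsub sm"
  have "p a = p (b + (a - b))" by simp
  also have "\<dots> = p b + p (a - b)" by (rule p_add[OF b KE_diff[OF lm a b]])
  also have "\<dots> = p b" using p_RS[OF d] by simp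
  finally show ?thesis .
qed
lemma p_sum: "\<forall>i\<in>A. g i \<in> kerev sm \<Longrightarrow> p (sum g A) = (\<Sum>i\<in>A. p (g i))"
  by (rule sum_hom_eq'[where S="kerev sm"]) (blast intro: p_add p0 KE_add[OF lm] KE_zero[OF lm])+

lemma lZ_lmod: "lmod lZ" using bZ by (simp add: bimod_def)
lemma lY_lmod: "lmod lY" using bY by (simp add: bimod_def)
lemma rY_add: "rY (u + v) b = rY u b + rY v b" using bY by (simp add: bimod_def rmod_def)

lemma blin_zero: "blin sm lZ (0 :: 'm \<Rightarrow> 'z)"
  by (simp add: blin_def lmod_simps[OF lZ_lmod])
lemma blin_plus: "blin sm lZ h \<Longrightarrow> blin sm lZ h' \<Longrightarrow> blin sm lZ (h + h')"
  by (simp add: blin_def lmod_simps[OF lZ_lmod] algebra_simps)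
lemma r0: "r 0 = 0"
proof -
  have "r (0 + 0) = r 0 + r 0" by (rule r2[OF blin_zero blin_zero])
  then show ?thesis by simp
qed
lemma r_sum: "\<forall>i\<in>A. blin sm lZ (h i) \<Longrightarrow> r (sum h A) = (\<Sum>i\<in>A. r (h i))"
  by (rule sum_hom_eq'[where S="{h. blin sm lZ h}"]) (blast intro: r2 r0 blin_plus blin_zero)+

lemma glin_blin:
  assumes g: "glin sm g"
  shows "blin sm lZ (p \<circ> g)"
  unfolding blin_def
proof (intro conjI allI)
  fix x y
  have k: "\<And>y. g y \<in> kerev sm" using g by (simp add: glin_def)
  have "g (x + y) - (g x + g y) \<in> relsub sm" using g unfolding glin_def by (simp add: diff_diff_eq)
  then have "p (g (x + y)) = p (g x + g y)" by (rule p_cong[OF k KE_add[OF lm k k]])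
  then show "(p \<circ> g) (x + y) = (p \<circ> g) x + (p \<circ> g) y" using p_add[OF k k] by simp
next
  fix b x
  have k: "\<And>y. g y \<in> kerev sm" using g by (simp add: glin_def)
  have "g (sm b x) - tlact sm b (g x) \<in> relsub sm" using g unfolding glin_def by simp
  then have "p (g (sm b x)) = p (tlact sm b (g x))" by (rule p_cong[OF k tlact_KE[OF lm k]])
  then show "(p \<circ> g) (sm b x) = lZ b ((p \<circ> g) x)" using p_tl[OF k] by simp
qed


lemma tlact_sum: "\<forall>i\<in>A. c i \<in> fin \<Longrightarrow> tlact sm b (sum c A) = (\<Sum>i\<in>A. tlact sm b (c i))"
  by (rule sum_hom_eq'[where S=fin]) (blast intro: tlact_add[OF lm] tlact_zero[OF lm] fin_add)+

lemma WD0: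
  assumes gl: "\<forall>(g,x)\<in>set R. glin sm g" and s: "(\<Sum>(g,x)\<leftarrow>R. g x) \<in> relsub sm"
  shows "(\<Sum>(g,x)\<leftarrow>R. r (p \<circ> g) x) = 0"
proof -
  define n where "n = length R"
  define G where "G = (\<lambda>j. fst (R!j))"
  define X where "X = (\<lambda>j. snd (R!j))"
  have glG: "glin sm (G j)" if "j < n" for j
  proof -
    have "R!j \<in> set R" using that by (simp add: n_def)
    then show ?thesis using gl by (auto simp: G_def case_prod_beta)
  qed
  have sumX: "(\<Sum>(g,x)\<leftarrow>R. g x) = (\<Sum>j<n. G j (X j))"
    by (simp only: list_sum_idx G_def X_def n_def)
  have Gk: "G j y \<in> kerev sm" if "j < n" for j y using glG[OF that] by (simp add: glin_def)
  have Gadd: "G j (u + v) - G j u - G j v \<in> relsub sm" if "j < n" for j u v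
    using glG[OF that] by (simp add: glin_def)
  have Gsm: "G j (sm b u) - tlact sm b (G j u) \<in> relsub sm" if "j < n" for j b u
    using glG[OF that] by (simp add: glin_def)
  have G0: "G j 0 \<in> relsub sm" if "j < n" for j
    using RS_uminus[OF lm Gadd[OF that, of 0 0]] by simp
  have RSsum: "(\<forall>i\<in>A. c i \<in> relsub sm) \<Longrightarrow> sum c A \<in> relsub sm" for c and A :: "nat set"
    by (rule sum_closed) (use RS_add[OF lm] RS_zero[OF lm] in blast)+
  define U where "U = {z::nat\<Rightarrow>'m. (\<forall>i\<ge>n. z i = 0) \<and> (\<Sum>j<n. G j (z j)) \<in> relsub sm}"
  have Ufin: "z \<in> dsumM" if "\<forall>i\<ge>n. z i = 0" for z :: "nat \<Rightarrow> 'm"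
  proof -
    have "{i. z i \<noteq> 0} \<subseteq> {..<n}" using that by (auto simp: not_less[symmetric])
    then show ?thesis unfolding dsumM_def by (auto intro: finite_subset)
  qed
  have dU: "dsubmod sm U"
    unfolding dsubmod_def
  proof (intro conjI ballI allI)
    show "U \<subseteq> dsumM" using Ufin unfolding U_def by blast
    show "0 \<in> U" unfolding U_def using RSsum G0 by simp
  next
    fix u v assume u: "u \<in> U" and v: "v \<in> U"
    have "(\<Sum>j<n. G j ((u + v) j)) = (\<Sum>j<n. G j (u j + v j) - G j (u j) - G j (v j)) + (\<Sum>j<n. G j (u j)) + (\<Sum>j<n. G j (v j))"
      by (simp add: sum_subtractf)
    also have "\<dots> \<in> relsub sm"
    proof -
      have "(\<Sum>j<n. G j (u j + v j) - G j (u j) - G j (v j)) \<in> relsub sm"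
        by (rule RSsum) (use Gadd in auto)
      then show ?thesis using u v unfolding U_def by (intro RS_add[OF lm]) auto
    qed
    finally show "u + v \<in> U" using u v unfolding U_def by auto
  next
    fix b u assume u: "u \<in> U"
    have fin: "\<forall>j\<in>{..<n}. G j (u j) \<in> fin" using Gk KE_fin[OF lm] by blast
    have "(\<Sum>j<n. G j (vsm sm b u j)) = (\<Sum>j<n. G j (sm b (u j)) - tlact sm b (G j (u j))) + tlact sm b (\<Sum>j<n. G j (u j))"
      by (simp add: sum_subtractf tlact_sum[OF fin] vsm_def)
    also have "\<dots> \<in> relsub sm"
    proof -
      have "(\<Sum>j<n. G j (sm b (u j)) - tlact sm b (G j (u j))) \<in> relsub sm"
        by (rule RSsum) (use Gsm in auto)
      moreover have "tlact sm b (\<Sum>j<n. G j (u j)) \<in> relsub sm"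
        using u unfolding U_def by (intro tlact_RS[OF lm]) auto
      ultimately show ?thesis by (rule RS_add[OF lm])
    qed
    finally show "vsm sm b u \<in> U" using u unfolding U_def by (auto simp: vsm_def lmod_simps[OF lm])
  qed
  have d0: "dsubmod sm {0}"
    unfolding dsubmod_def using Ufin[of 0] by (auto simp: vsm_def lmod_simps[OF lm] fun_eq_iff)
  define xh where "xh = (\<lambda>i. if i < n then X i else 0)"
  have xhU: "xh \<in> U"
  proof -
    have "(\<Sum>j<n. G j (xh j)) = (\<Sum>j<n. G j (X j))" by (rule sum.cong) (auto simp: xh_def)
    then show ?thesis using s sumX unfolding U_def xh_def by auto
  qed
  obtain hs where H1: "\<forall>(h,w)\<in>set hs. homq sm U {0} h"
    and H2: "xh - (\<Sum>(h,w)\<leftarrow>hs. h w) \<in> {0}"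
  proof -
    have sub: "{0} \<subseteq> U" using dU by (simp add: dsubmod_def)
    have "\<exists>hs. (\<forall>(h, x)\<in>set hs. homq sm U {0} h) \<and> xh - (\<Sum>(h, y)\<leftarrow>hs. h y) \<in> {0}"
      using gsig[unfolded generates_sigma_def, rule_format, OF dU d0 sub xhU] .
    then show ?thesis using that by blast
  qed
  define L where "L = length hs"
  define H where "H = (\<lambda>l. fst (hs!l))"
  define W where "W = (\<lambda>l. snd (hs!l))"
  have hq: "homq sm U {0} (H l)" if "l < L" for l
  proof -
    have "hs!l \<in> set hs" using that by (simp add: L_def)
    then show ?thesis using H1 by (auto simp: H_def case_prod_beta)
  qed
  have HU: "H l y \<in> U" if "l < L" for l y using hq[OF that] by (simp add: homq_def)
  have Hadd: "H l (x + y) = H l x + H l y" if "l < L" for l x y using hq[OF that] by (simp add: homq_def algebra_simps)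
  have Hsm: "H l (sm b x) = vsm sm b (H l x)" if "l < L" for l b x using hq[OF that] by (simp add: homq_def)
  have xhs: "xh = (\<Sum>l<L. H l (W l))"
  proof -
    have "xh = (\<Sum>(h,w)\<leftarrow>hs. h w)" using H2 by simp
    also have "\<dots> = (\<Sum>l<L. H l (W l))" by (simp only: list_sum_idx H_def W_def L_def)
    finally show ?thesis .
  qed
  define a where "a = (\<lambda>j l y. H l y j)"
  have aE: "a j l \<in> EndB sm" if "l < L" for j l
    unfolding EndB_def blin_def a_def using Hadd[OF that] Hsm[OF that] by (simp add: vsm_def)
  have Xj: "X j = (\<Sum>l<L. a j l (W l))" if "j < n" for j
  proof -
    have "X j = xh j" using that by (simp add: xh_def)
    also have "\<dots> = (\<Sum>l<L. H l (W l) j)" unfolding xhs by (rule sum_fun_apply)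
    finally show ?thesis by (simp add: a_def)
  qed
  have bG: "blin sm lZ (p \<circ> G j)" if "j < n" for j by (rule glin_blin[OF glG[OF that]])
  have zero: "(\<Sum>j<n. p \<circ> G j \<circ> a j l) = 0" if "l < L" for l
  proof
    fix y
    have "(\<Sum>j<n. p \<circ> G j \<circ> a j l) y = (\<Sum>j<n. p (G j (H l y j)))"
      by (simp add: sum_fun_apply a_def)
    also have "\<dots> = p (\<Sum>j<n. G j (H l y j))"
      by (rule p_sum[symmetric]) (use Gk in blast)
    also have "\<dots> = 0" using HU[OF that, of y] p_RS unfolding U_def by blast
    finally show "(\<Sum>j<n. p \<circ> G j \<circ> a j l) y = 0 y" by simp
  qed
  have "(\<Sum>(g,x)\<leftarrow>R. r (p \<circ> g) x) = (\<Sum>j<n. r (p \<circ> G j) (X j))"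
    by (simp only: list_sum_idx G_def X_def n_def)
  also have "\<dots> = (\<Sum>j<n. \<Sum>l<L. r (p \<circ> G j) (a j l (W l)))"
    by (rule sum.cong[OF refl]) (simp add: Xj blin_sum[OF r1[OF bG]])
  also have "\<dots> = (\<Sum>j<n. \<Sum>l<L. r (p \<circ> G j \<circ> a j l) (W l))"
    by (rule sum.cong[OF refl], rule sum.cong[OF refl]) (simp add: r3[OF bG aE])
  also have "\<dots> = (\<Sum>l<L. \<Sum>j<n. r (p \<circ> G j \<circ> a j l) (W l))"
    by (rule sum.swap)
  also have "\<dots> = (\<Sum>l<L. r (\<Sum>j<n. p \<circ> G j \<circ> a j l) (W l))"
  proof (rule sum.cong[OF refl])
    fix l assume l: "l \<in> {..<L}"
    have "\<forall>j\<in>{..<n}. blin sm lZ (p \<circ> G j \<circ> a j l)"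
      using bG aE l by (auto intro: blin_comp)
    then show "(\<Sum>j<n. r (p \<circ> G j \<circ> a j l) (W l)) = r (\<Sum>j<n. p \<circ> G j \<circ> a j l) (W l)"
      by (simp add: r_sum sum_fun_apply)
  qed
  also have "\<dots> = 0" using zero by (simp add: r0)
  finally show ?thesis .
qed


lemma distinct_sum: "distinct ps \<Longrightarrow> (\<Sum>i<length ps. F (ps!i)) = sum F (set ps)"
proof -
  assume d: "distinct ps"
  have "sum F (set ps) = sum_list (map F ps)" by (rule sum_list_distinct_conv_sum_set[OF d, symmetric])
  also have "\<dots> = (\<Sum>i = 0..<length (map F ps). map F ps ! i)" by (rule sum_list_sum_nth)
  also have "\<dots> = (\<Sum>i<length ps. F (ps!i))" by (simp add: atLeast0LessThan)
  finally show ?thesis by simp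
qed

lemma RSsum: "(\<forall>i\<in>A. c i \<in> relsub sm) \<Longrightarrow> sum c A \<in> relsub sm"
  by (rule sum_closed) (use RS_add[OF lm] RS_zero[OF lm] in blast)+

lemma delta_sum_RS:
  assumes phi: "\<phi> \<in> dualM sm"
  shows "delta (sum a A, \<phi>) - (\<Sum>l\<in>A. delta (a l, \<phi>)) \<in> relsub sm"
proof (induction A rule: infinite_finite_induct)
  have g0: "delta (0 + 0, \<phi>) - delta (0, \<phi>) - delta (0, \<phi>) \<in> relsub sm"
    by (rule RS_gen[OF lm]) (unfold relgens_def, use phi in blast)
  have z: "delta (0::'m, \<phi>) \<in> relsub sm" using RS_uminus[OF lm g0] by simp
  { case (infinite A) then show ?case using z by simp }
  { case empty then show ?case using z by simp }
next
  case (insert x F)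
  have g: "delta (a x + sum a F, \<phi>) - delta (a x, \<phi>) - delta (sum a F, \<phi>) \<in> relsub sm"
    by (rule RS_gen[OF lm]) (unfold relgens_def, use phi in blast)
  have "delta (sum a (insert x F), \<phi>) - (\<Sum>l\<in>insert x F. delta (a l, \<phi>))
      = (delta (a x + sum a F, \<phi>) - delta (a x, \<phi>) - delta (sum a F, \<phi>))
        + (delta (sum a F, \<phi>) - (\<Sum>l\<in>F. delta (a l, \<phi>)))"
    using insert by (simp add: algebra_simps)
  also have "\<dots> \<in> relsub sm" by (rule RS_add[OF lm g insert.IH])
  finally show ?case .
qed

lemma ofc: "of_int k * (b * v) = b * (of_int k * (v::'b))"
  by (metis mult.assoc mult_of_int_commute)

lemma EX:
  assumes c: "c \<in> kerev sm"
  shows "\<exists>R. (\<forall>(g,x)\<in>set R. glin sm g) \<and> c - (\<Sum>(g,x)\<leftarrow>R. g x) \<in> relsub sm"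
proof -
  have cfin: "c \<in> fin" using KE_fin[OF lm c] .
  obtain ps where ps: "set ps = fsupp c" "distinct ps"
    using finite_distinct_list cfin unfolding fin_def by blast
  define n where "n = length ps"
  define k where "k = (\<lambda>i. c (ps!i))"
  define m where "m = (\<lambda>i. fst (ps!i))"
  define \<phi> where "\<phi> = (\<lambda>i. snd (ps!i))"
  have inS: "ps!i \<in> fsupp c" if "i < n" for i using that ps(1) n_def nth_mem by blast
  have \<phi>D: "\<phi> i \<in> dualM sm" if "i < n" for i
    using inS[OF that] c unfolding \<phi>_def by (auto simp: KE_iff[OF lm] freeT_iff[OF lm])
  define \<Phi> where "\<Phi> = (\<lambda>z. \<Sum>i<n. of_int (k i) * \<phi> i (z i))"
  have \<Phi>add: "\<Phi> (u + v) = \<Phi> u + \<Phi> v" for u v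
  proof -
    have "\<Phi> (u + v) = (\<Sum>i<n. of_int (k i) * \<phi> i (u i) + of_int (k i) * \<phi> i (v i))"
      unfolding \<Phi>_def by (rule sum.cong) (auto simp: dual_add[OF lm \<phi>D] distrib_left)
    then show ?thesis unfolding \<Phi>_def by (simp add: sum.distrib)
  qed
  have \<Phi>sm: "\<Phi> (vsm sm b u) = b * \<Phi> u" for b u
  proof -
    have "\<Phi> (vsm sm b u) = (\<Sum>i<n. b * (of_int (k i) * \<phi> i (u i)))"
      unfolding \<Phi>_def by (rule sum.cong) (auto simp: vsm_def dual_sm[OF lm \<phi>D] ofc)
    then show ?thesis unfolding \<Phi>_def by (simp add: sum_distrib_left)
  qed
  have \<Phi>0: "\<Phi> 0 = 0" using \<Phi>add[of 0 0] by simp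
  define U where "U = {z::nat\<Rightarrow>'m. (\<forall>i\<ge>n. z i = 0) \<and> \<Phi> z = 0}"
  have Ufin: "z \<in> dsumM" if "\<forall>i\<ge>n. z i = 0" for z :: "nat \<Rightarrow> 'm"
  proof -
    have "{i. z i \<noteq> 0} \<subseteq> {..<n}" using that by (auto simp: not_less[symmetric])
    then show ?thesis unfolding dsumM_def by (auto intro: finite_subset)
  qed
  have dU: "dsubmod sm U"
    unfolding dsubmod_def
  proof (intro conjI ballI allI)
    show "U \<subseteq> dsumM" using Ufin unfolding U_def by blast
    show "0 \<in> U" unfolding U_def using \<Phi>0 by simp
  next
    fix u v assume "u \<in> U" "v \<in> U"
    then show "u + v \<in> U" unfolding U_def using \<Phi>add by auto
  next
    fix b u assume "u \<in> U"
    then show "vsm sm b u \<in> U" unfolding U_def using \<Phi>sm by (auto simp: vsm_def lmod_simps[OF lm])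
  qed
  have d0: "dsubmod sm {0}"
    unfolding dsubmod_def using Ufin[of 0] by (auto simp: vsm_def lmod_simps[OF lm] fun_eq_iff)
  define mh where "mh = (\<lambda>i. if i < n then m i else 0)"
  have mhU: "mh \<in> U"
  proof -
    have "\<Phi> mh = (\<Sum>i<n. of_int (c (ps!i)) * E (ps!i))"
      unfolding \<Phi>_def by (rule sum.cong) (auto simp: mh_def k_def m_def \<phi>_def E_def)
    also have "\<dots> = (\<Sum>p\<in>fsupp c. of_int (c p) * E p)"
      using distinct_sum[OF ps(2), of "\<lambda>p. of_int (c p) * E p"] ps(1) n_def by simp
    also have "\<dots> = 0" using c by (simp add: KE_iff[OF lm] evM_def E_def)
    finally show ?thesis unfolding U_def mh_def by simp
  qed
  obtain hs where H1: "\<forall>(h,w)\<in>set hs. homq sm U {0} h"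
    and H2: "mh - (\<Sum>(h,w)\<leftarrow>hs. h w) \<in> {0}"
  proof -
    have sub: "{0} \<subseteq> U" using dU by (simp add: dsubmod_def)
    have "\<exists>hs. (\<forall>(h, x)\<in>set hs. homq sm U {0} h) \<and> mh - (\<Sum>(h, y)\<leftarrow>hs. h y) \<in> {0}"
      using gsig[unfolded generates_sigma_def, rule_format, OF dU d0 sub mhU] .
    then show ?thesis using that by blast
  qed
  define L where "L = length hs"
  define H where "H = (\<lambda>l. fst (hs!l))"
  define W where "W = (\<lambda>l. snd (hs!l))"
  have hq: "homq sm U {0} (H l)" if "l < L" for l
  proof -
    have "hs!l \<in> set hs" using that by (simp add: L_def)
    then show ?thesis using H1 by (auto simp: H_def case_prod_beta)
  qed
  have HU: "H l y \<in> U" if "l < L" for l y using hq[OF that] by (simp add: homq_def)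
  have Hadd: "H l (x + y) = H l x + H l y" if "l < L" for l x y using hq[OF that] by (simp add: homq_def algebra_simps)
  have Hsm: "H l (sm b x) = vsm sm b (H l x)" if "l < L" for l b x using hq[OF that] by (simp add: homq_def)
  have mhs: "mh = (\<Sum>l<L. H l (W l))"
  proof -
    have "mh = (\<Sum>(h,w)\<leftarrow>hs. h w)" using H2 by simp
    also have "\<dots> = (\<Sum>l<L. H l (W l))" by (simp only: list_sum_idx H_def W_def L_def)
    finally show ?thesis .
  qed
  have mi: "m i = (\<Sum>l<L. H l (W l) i)" if "i < n" for i
  proof -
    have "m i = mh i" using that by (simp add: mh_def)
    also have "\<dots> = (\<Sum>l<L. H l (W l) i)" unfolding mhs by (rule sum_fun_apply)
    finally show ?thesis .
  qed
  define g where "g = (\<lambda>l y. \<Sum>i<n. smul (k i) (delta (H l y i, \<phi> i)))"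
  have glin: "glin sm (g l)" if l: "l < L" for l
    unfolding glin_def
  proof (intro conjI allI)
    fix y
    have fr: "g l y \<in> freeT sm" unfolding g_def
      by (rule sum_closed) (use freeT_add[OF lm] freeT_zero[OF lm] freeT_smul[OF lm] freeT_delta[OF lm] \<phi>D in auto)
    have "evM (g l y) = (\<Sum>i<n. evM (smul (k i) (delta (H l y i, \<phi> i))))" unfolding g_def
      by (rule sum_hom_eq'[where S=fin], rule evM_add, assumption+, rule fin_add, assumption+, rule fin_zero, simp add: evM_def, rule fin_smul, rule fin_delta)
    also have "\<dots> = \<Phi> (H l y)" unfolding \<Phi>_def by (simp add: evM_smul evM_delta E_def)
    also have "\<dots> = 0" using HU[OF l] unfolding U_def by simp
    finally show "g l y \<in> kerev sm" using fr by (simp add: KE_iff[OF lm])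
  next
    fix x y
    have "g l (x + y) - g l x - g l y = (\<Sum>i<n. smul (k i) (delta (H l x i + H l y i, \<phi> i) - delta (H l x i, \<phi> i) - delta (H l y i, \<phi> i)))"
      by (rule ext) (simp add: g_def Hadd[OF l] sum_fun_apply smul_def sum_subtractf right_diff_distrib)
    also have "\<dots> \<in> relsub sm"
    proof (rule RSsum, rule ballI)
      fix i assume "i \<in> {..<n}"
      then have "\<phi> i \<in> dualM sm" using \<phi>D by simp
      then have "delta (H l x i + H l y i, \<phi> i) - delta (H l x i, \<phi> i) - delta (H l y i, \<phi> i) \<in> relsub sm"
        by (intro RS_gen[OF lm]) (unfold relgens_def, blast)
      then show "smul (k i) (delta (H l x i + H l y i, \<phi> i) - delta (H l x i, \<phi> i) - delta (H l y i, \<phi> i)) \<in> relsub sm"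
        by (rule RS_smul[OF lm])
    qed
    finally show "g l (x + y) - g l x - g l y \<in> relsub sm" .
  next
    fix b x
    have "tlact sm b (g l x) = (\<Sum>i<n. tlact sm b (smul (k i) (delta (H l x i, \<phi> i))))"
      unfolding g_def by (rule tlact_sum) (auto intro: fin_smul)
    also have "\<dots> = g l (sm b x)"
      unfolding g_def Hsm[OF l] by (simp add: tlact_push push_smul push_delta vsm_def)
    finally show "g l (sm b x) - tlact sm b (g l x) \<in> relsub sm" using RS_zero[OF lm] by simp
  qed
  define R where "R = map (\<lambda>l. (g l, W l)) [0..<L]"
  have Rgl: "\<forall>(g,x)\<in>set R. glin sm g" unfolding R_def using glin by auto
  have sumR: "(\<Sum>(g,x)\<leftarrow>R. g x) = (\<Sum>l<L. g l (W l))"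
    unfolding R_def by (simp add: interv_sum_list_conv_sum_set_nat atLeast0LessThan o_def)
  have cexp: "c = (\<Sum>i<n. smul (k i) (delta (m i, \<phi> i)))"
  proof -
    have "c = (\<Sum>p\<in>fsupp c. smul (c p) (delta p))" by (rule expand[OF cfin])
    also have "\<dots> = (\<Sum>i<n. smul (c (ps!i)) (delta (ps!i)))"
      using distinct_sum[OF ps(2), of "\<lambda>p. smul (c p) (delta p)"] ps(1) n_def by simp
    also have "\<dots> = (\<Sum>i<n. smul (k i) (delta (m i, \<phi> i)))"
      by (simp add: k_def m_def \<phi>_def)
    finally show ?thesis .
  qed
  have "c - (\<Sum>(g,x)\<leftarrow>R. g x) = (\<Sum>i<n. smul (k i) (delta (\<Sum>l<L. H l (W l) i, \<phi> i) - (\<Sum>l<L. delta (H l (W l) i, \<phi> i))))"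
  proof -
    have "c - (\<Sum>(g,x)\<leftarrow>R. g x) = (\<Sum>i<n. smul (k i) (delta (m i, \<phi> i))) - (\<Sum>l<L. \<Sum>i<n. smul (k i) (delta (H l (W l) i, \<phi> i)))"
      unfolding sumR g_def using cexp by simp
    also have "\<dots> = (\<Sum>i<n. smul (k i) (delta (m i, \<phi> i) - (\<Sum>l<L. delta (H l (W l) i, \<phi> i))))"
      by (rule ext) (simp add: sum_fun_apply smul_def sum_subtractf right_diff_distrib sum_distrib_left sum.swap[of _ "{..<L}"])
    also have "\<dots> = (\<Sum>i<n. smul (k i) (delta (\<Sum>l<L. H l (W l) i, \<phi> i) - (\<Sum>l<L. delta (H l (W l) i, \<phi> i))))"
      by (rule sum.cong) (simp_all add: mi)
    finally show ?thesis .
  qed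
  also have "\<dots> \<in> relsub sm"
    by (rule RSsum, rule ballI, rule RS_smul[OF lm], rule delta_sum_RS) (use \<phi>D in auto)
  finally show ?thesis using Rgl by blast
qed


lemma sum_list_cong': "(\<And>z. z \<in> set xs \<Longrightarrow> F z = G z) \<Longrightarrow> sum_list (map F xs) = sum_list (map G xs)"
  by (induction xs) auto

lemma RSlist: "(\<forall>z\<in>set xs. F z \<in> relsub sm) \<Longrightarrow> (\<Sum>z\<leftarrow>xs. F z) \<in> relsub sm"
  by (induction xs) (auto intro: RS_add[OF lm] RS_zero[OF lm])

lemma KElist: "(\<forall>z\<in>set xs. F z \<in> kerev sm) \<Longrightarrow> (\<Sum>z\<leftarrow>xs. F z) \<in> kerev sm"
  by (induction xs) (auto intro: KE_add[OF lm] KE_zero[OF lm])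

lemma sum_list_neg: "(\<Sum>z\<leftarrow>xs. - F z) = - (\<Sum>z\<leftarrow>xs. (F z :: 'a::ab_group_add))"
  by (induction xs) auto

lemma sum_list_diff: "(\<Sum>z\<leftarrow>xs. F z - G z) = (\<Sum>z\<leftarrow>xs. F z) - (\<Sum>z\<leftarrow>xs. (G z :: 'a::ab_group_add))"
  by (induction xs) auto

lemma p_list: "(\<forall>z\<in>set xs. F z \<in> kerev sm) \<Longrightarrow> p (\<Sum>z\<leftarrow>xs. F z) = (\<Sum>z\<leftarrow>xs. p (F z))"
proof (induction xs)
  case Nil then show ?case by (simp only: list.map(1) sum_list.Nil p0)
next
  case (Cons a xs)
  have k: "F a \<in> kerev sm" "(\<Sum>z\<leftarrow>xs. F z) \<in> kerev sm" using Cons.prems KElist by auto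
  have "p (\<Sum>z\<leftarrow>a # xs. F z) = p (F a + (\<Sum>z\<leftarrow>xs. F z))" by (simp only: list.map(2) sum_list.Cons)
  also have "\<dots> = p (F a) + p (\<Sum>z\<leftarrow>xs. F z)" by (rule p_add[OF k])
  also have "\<dots> = (\<Sum>z\<leftarrow>a # xs. p (F z))" using Cons by (simp only: list.map(2) sum_list.Cons) simp
  finally show ?case .
qed

lemma tlact_list: "(\<forall>z\<in>set xs. F z \<in> fin) \<Longrightarrow> tlact sm b (\<Sum>z\<leftarrow>xs. F z) = (\<Sum>z\<leftarrow>xs. tlact sm b (F z))"
proof (induction xs)
  case Nil then show ?case by (simp only: list.map(1) sum_list.Nil tlact_zero[OF lm])
next
  case (Cons a xs)
  have "(\<Sum>z\<leftarrow>xs. F z) \<in> fin" using Cons.prems by (intro sum_list_hom[where S=fin and F=id, THEN conjunct2]) auto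
  moreover have "F a \<in> fin" using Cons.prems by simp
  ultimately have "tlact sm b (F a + (\<Sum>z\<leftarrow>xs. F z)) = tlact sm b (F a) + tlact sm b (\<Sum>z\<leftarrow>xs. F z)"
    using tlact_add[OF lm] by blast
  then show ?case using Cons by (simp only: list.map(2) sum_list.Cons) simp
qed

lemma tract_list: "(\<forall>z\<in>set xs. F z \<in> fin) \<Longrightarrow> tract (\<Sum>z\<leftarrow>xs. F z) b = (\<Sum>z\<leftarrow>xs. tract (F z) b)"
proof (induction xs)
  case Nil then show ?case by (simp only: list.map(1) sum_list.Nil tract_zero[OF lm])
next
  case (Cons a xs)
  have "(\<Sum>z\<leftarrow>xs. F z) \<in> fin" using Cons.prems by (intro sum_list_hom[where S=fin and F=id, THEN conjunct2]) auto
  moreover have "F a \<in> fin" using Cons.prems by simp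
  ultimately have "tract (F a + (\<Sum>z\<leftarrow>xs. F z)) b = tract (F a) b + tract (\<Sum>z\<leftarrow>xs. F z) b"
    using tract_add[OF lm] by blast
  then show ?case using Cons by (simp only: list.map(2) sum_list.Cons) simp
qed

lemma finlist: "(\<forall>z\<in>set xs. F z \<in> fin) \<Longrightarrow> (\<Sum>z\<leftarrow>xs. F z) \<in> fin"
  by (intro sum_list_hom[where S=fin and F=id, THEN conjunct2]) auto

lemma glin_KE: "glin sm g \<Longrightarrow> g y \<in> kerev sm" by (simp add: glin_def)

lemma glin_neg: "glin sm g \<Longrightarrow> g (- x) + g x \<in> relsub sm"
proof -
  assume g: "glin sm g"
  have a: "g (x + - x) - g x - g (- x) \<in> relsub sm" using g unfolding glin_def by blast
  have b: "g (0 + 0) - g 0 - g 0 \<in> relsub sm" using g unfolding glin_def by blast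
  have z: "g 0 \<in> relsub sm" using RS_uminus[OF lm b] by simp
  have "g (- x) + g x = g 0 - (g (x + - x) - g x - g (- x))" by simp
  also have "\<dots> \<in> relsub sm" by (rule RS_diff[OF lm z a])
  finally show ?thesis .
qed

lemma fY_list: "f (\<Sum>z\<leftarrow>xs. F z) = (\<Sum>z\<leftarrow>xs. f (F z))"
proof -
  have "\<forall>x y. f (x + y) = f x + f y" using fmap by (simp add: bimap_def)
  then show ?thesis by (intro sum_list_hom[where S=UNIV, THEN conjunct1]) (auto simp: addhom_simps)
qed

lemma lY_list: "lY b (\<Sum>z\<leftarrow>xs. F z) = (\<Sum>z\<leftarrow>xs. lY b (F z))"
  by (intro sum_list_hom[where S=UNIV, THEN conjunct1]) (auto simp: lmod_simps[OF lY_lmod])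

lemma rY_list: "rY (\<Sum>z\<leftarrow>xs. F z) b = (\<Sum>z\<leftarrow>xs. rY (F z) b)"
proof -
  have "\<forall>x y. rY (x + y) b = rY x b + rY y b" by (simp add: rY_add)
  moreover have "rY 0 b = 0" using addhom_simps(1)[of "\<lambda>y. rY y b"] rY_add by simp
  ultimately show ?thesis by (intro sum_list_hom[where S=UNIV and F="\<lambda>y. rY y b", THEN conjunct1]) auto
qed

definition val where "val R = (\<Sum>(g,x)\<leftarrow>R. r (p \<circ> g) x)"

definition q where "q c = (if \<exists>R. isrep sm c R then val (SOME R. isrep sm c R) else 0)"

lemma WD:
  assumes R1: "isrep sm c R1" and R2: "isrep sm c R2"
  shows "val R1 = val R2"
proof -
  define R where "R = R1 @ map (\<lambda>(g,x). (g, - x)) R2"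
  have gl1: "\<forall>(g,x)\<in>set R1. glin sm g" and gl2: "\<forall>(g,x)\<in>set R2. glin sm g"
    using R1 R2 by (simp_all add: isrep_def)
  have gl: "\<forall>(g,x)\<in>set R. glin sm g" using gl1 gl2 unfolding R_def by auto
  have e1: "(\<Sum>(g,x)\<leftarrow>R. g x) = (\<Sum>(g,x)\<leftarrow>R1. g x) + (\<Sum>(g,x)\<leftarrow>R2. g (- x))"
    unfolding R_def by (simp add: o_def case_prod_beta split_def)
  have e2: "(\<Sum>(g,x)\<leftarrow>R2. g (- x) + g x) = (\<Sum>(g,x)\<leftarrow>R2. g (- x)) + (\<Sum>(g,x)\<leftarrow>R2. g x)"
    by (induction R2) (simp_all add: split_def algebra_simps)
  have "(\<Sum>(g,x)\<leftarrow>R. g x) = - (c - (\<Sum>(g,x)\<leftarrow>R1. g x)) + (c - (\<Sum>(g,x)\<leftarrow>R2. g x)) + (\<Sum>(g,x)\<leftarrow>R2. g (- x) + g x)"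
    by (simp only: e1 e2) (simp add: algebra_simps)
  also have "\<dots> \<in> relsub sm"
  proof (intro RS_add[OF lm] RS_uminus[OF lm])
    show "c - (\<Sum>(g,x)\<leftarrow>R1. g x) \<in> relsub sm" using R1 by (simp add: isrep_def)
    show "c - (\<Sum>(g,x)\<leftarrow>R2. g x) \<in> relsub sm" using R2 by (simp add: isrep_def)
    show "(\<Sum>(g,x)\<leftarrow>R2. g (- x) + g x) \<in> relsub sm"
      using gl2 by (intro RSlist) (auto intro: glin_neg)
  qed
  finally have "(\<Sum>(g,x)\<leftarrow>R. r (p \<circ> g) x) = 0" by (rule WD0[OF gl])
  moreover have "(\<Sum>(g,x)\<leftarrow>R. r (p \<circ> g) x) = val R1 - val R2"
  proof -
    have "(\<Sum>(g,x)\<leftarrow>R2. r (p \<circ> g) (- x)) = (\<Sum>(g,x)\<leftarrow>R2. - r (p \<circ> g) x)"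
    proof (rule arg_cong[where f=sum_list], rule map_cong[OF refl])
      fix z assume "z \<in> set R2"
      then have "blin sm lY (r (p \<circ> fst z))" using gl2 by (auto intro!: r1 glin_blin)
      then show "(\<lambda>(g,x). r (p \<circ> g) (- x)) z = (\<lambda>(g,x). - r (p \<circ> g) x) z"
        by (auto simp: case_prod_beta blin_simps)
    qed
    also have "\<dots> = - val R2" unfolding val_def by (induction R2) (simp_all add: split_def)
    finally show ?thesis unfolding R_def val_def by (simp add: split_def o_def)
  qed
  ultimately show ?thesis by simp
qed

lemma q_rep: "isrep sm c R \<Longrightarrow> q c = val R"
proof -
  assume R: "isrep sm c R"
  then have "isrep sm c (SOME R. isrep sm c R)" by (rule someI)
  then have "val (SOME R. isrep sm c R) = val R" using WD R by blast
  then show ?thesis using R unfolding q_def by auto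
qed

lemma EXrep: "c \<in> kerev sm \<Longrightarrow> \<exists>R. isrep sm c R"
  using EX unfolding isrep_def by blast

lemma LIFT: "kermap sm lY rY q \<and> (\<forall>c\<in>kerev sm. f (q c) = p c)"
  unfolding kermap_def
proof (intro conjI ballI allI)
  fix c assume c: "c \<in> relsub sm"
  have "isrep sm c []" using c by (simp add: isrep_def)
  then show "q c = 0" by (simp add: q_rep val_def)
next
  fix c d assume c: "c \<in> kerev sm" and d: "d \<in> kerev sm"
  obtain R1 R2 where R1: "isrep sm c R1" and R2: "isrep sm d R2" using EXrep c d by blast
  have "isrep sm (c + d) (R1 @ R2)"
  proof -
    have "c + d - (\<Sum>(g,x)\<leftarrow>R1 @ R2. g x) = (c - (\<Sum>(g,x)\<leftarrow>R1. g x)) + (d - (\<Sum>(g,x)\<leftarrow>R2. g x))"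
      by simp
    also have "\<dots> \<in> relsub sm" using R1 R2 by (intro RS_add[OF lm]) (simp_all add: isrep_def)
    finally show ?thesis using R1 R2 by (auto simp: isrep_def)
  qed
  then show "q (c + d) = q c + q d" using q_rep R1 R2 by (simp add: val_def)
next
  fix b c assume c: "c \<in> kerev sm"
  obtain R where R: "isrep sm c R" using EXrep c by blast
  have gl: "\<forall>(g,x)\<in>set R. glin sm g" using R by (simp add: isrep_def)
  define R' where "R' = map (\<lambda>(g,x). (g, sm b x)) R"
  have fins: "\<forall>z\<in>set R. (\<lambda>(g,x). g x) z \<in> fin"
  proof
    fix z assume "z \<in> set R"
    then have "glin sm (fst z)" using gl by auto
    then show "(\<lambda>(g,x). g x) z \<in> fin" by (simp add: case_prod_beta KE_fin[OF lm] glin_KE)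
  qed
  have "isrep sm (tlact sm b c) R'"
  proof -
    have "tlact sm b c - (\<Sum>(g,x)\<leftarrow>R'. g x) = tlact sm b (c - (\<Sum>(g,x)\<leftarrow>R. g x)) - (\<Sum>(g,x)\<leftarrow>R. g (sm b x) - tlact sm b (g x))"
    proof -
      have "tlact sm b (c - (\<Sum>(g,x)\<leftarrow>R. g x)) = tlact sm b c - (\<Sum>(g,x)\<leftarrow>R. tlact sm b (g x))"
        using tlact_diff[OF lm KE_fin[OF lm c] finlist[OF fins]] tlact_list[OF fins] by (simp add: split_def)
      moreover have "(\<Sum>(g,x)\<leftarrow>R'. g x) = (\<Sum>(g,x)\<leftarrow>R. g (sm b x))"
        unfolding R'_def by (simp add: o_def split_def)
      moreover have "(\<Sum>(g,x)\<leftarrow>R. g (sm b x) - tlact sm b (g x)) = (\<Sum>(g,x)\<leftarrow>R. g (sm b x)) - (\<Sum>(g,x)\<leftarrow>R. tlact sm b (g x))"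
        by (induction R) (simp_all add: split_def algebra_simps)
      ultimately show ?thesis by (simp only:) (simp add: algebra_simps)
    qed
    also have "\<dots> \<in> relsub sm"
    proof (rule RS_diff[OF lm])
      show "tlact sm b (c - (\<Sum>(g,x)\<leftarrow>R. g x)) \<in> relsub sm" using R by (intro tlact_RS[OF lm]) (simp add: isrep_def)
      show "(\<Sum>(g,x)\<leftarrow>R. g (sm b x) - tlact sm b (g x)) \<in> relsub sm"
        using gl by (intro RSlist) (auto simp: glin_def)
    qed
    finally show ?thesis using gl unfolding isrep_def R'_def by auto
  qed
  then have "q (tlact sm b c) = val R'" by (rule q_rep)
  also have "\<dots> = (\<Sum>(g,x)\<leftarrow>R. lY b (r (p \<circ> g) x))"
    unfolding val_def R'_def map_map
  proof (rule sum_list_cong')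
    fix z assume "z \<in> set R"
    then have "blin sm lY (r (p \<circ> fst z))" using gl by (auto intro!: r1 glin_blin)
    then show "((\<lambda>(g,x). r (p \<circ> g) x) \<circ> (\<lambda>(g,x). (g, sm b x))) z = (\<lambda>(g,x). lY b (r (p \<circ> g) x)) z"
      by (simp add: split_def blin_sm)
  qed
  also have "\<dots> = lY b (val R)" unfolding val_def by (simp add: lY_list split_def)
  finally show "q (tlact sm b c) = lY b (q c)" using q_rep[OF R] by simp
next
  fix b c assume c: "c \<in> kerev sm"
  obtain R where R: "isrep sm c R" using EXrep c by blast
  have gl: "\<forall>(g,x)\<in>set R. glin sm g" using R by (simp add: isrep_def)
  define R' where "R' = map (\<lambda>(g,x). (\<lambda>y. tract (g y) b, x)) R"
  have fins: "\<forall>z\<in>set R. (\<lambda>(g,x). g x) z \<in> fin"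
  proof
    fix z assume "z \<in> set R"
    then have "glin sm (fst z)" using gl by auto
    then show "(\<lambda>(g,x). g x) z \<in> fin" by (simp add: case_prod_beta KE_fin[OF lm] glin_KE)
  qed
  have gl': "glin sm (\<lambda>y. tract (g y) b)" if g: "glin sm g" for g
    unfolding glin_def
  proof (intro conjI allI)
    have k: "\<And>y. g y \<in> kerev sm" using g by (simp add: glin_def)
    have fi: "\<And>y. g y \<in> fin" using KE_fin[OF lm k] .
    fix y show "tract (g y) b \<in> kerev sm" by (rule tract_KE[OF lm k])
  next
    have k: "\<And>y. g y \<in> kerev sm" using g by (simp add: glin_def)
    have fi: "\<And>y. g y \<in> fin" using KE_fin[OF lm k] .
    fix x y
    have "tract (g (x + y)) b - tract (g x) b - tract (g y) b = tract (g (x + y) - g x - g y) b"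
      using fi by (simp add: tract_diff[OF lm] fin_diff)
    also have "\<dots> \<in> relsub sm" using g by (intro tract_RS[OF lm]) (simp add: glin_def)
    finally show "tract (g (x + y)) b - tract (g x) b - tract (g y) b \<in> relsub sm" .
  next
    have k: "\<And>y. g y \<in> kerev sm" using g by (simp add: glin_def)
    have fi: "\<And>y. g y \<in> fin" using KE_fin[OF lm k] .
    fix b' x
    have "tract (g (sm b' x)) b - tlact sm b' (tract (g x) b) = tract (g (sm b' x) - tlact sm b' (g x)) b"
    proof -
      have tf: "tlact sm b' (g x) \<in> fin" unfolding tlact_push by (rule fin_push[OF fi])
      have "tlact sm b' (tract (g x) b) = tract (tlact sm b' (g x)) b" by (rule tl_tr_comm[OF lm fi])
      then show ?thesis using tract_diff[OF lm fi tf] by simp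
    qed
    also have "\<dots> \<in> relsub sm" using g by (intro tract_RS[OF lm]) (simp add: glin_def)
    finally show "tract (g (sm b' x)) b - tlact sm b' (tract (g x) b) \<in> relsub sm" .
  qed
  have "isrep sm (tract c b) R'"
  proof -
    have "tract c b - (\<Sum>(g,x)\<leftarrow>R'. g x) = tract (c - (\<Sum>(g,x)\<leftarrow>R. g x)) b"
    proof -
      have "tract (c - (\<Sum>(g,x)\<leftarrow>R. g x)) b = tract c b - (\<Sum>(g,x)\<leftarrow>R. tract (g x) b)"
        using tract_diff[OF lm KE_fin[OF lm c] finlist[OF fins]] tract_list[OF fins] by (simp add: split_def)
      then show ?thesis unfolding R'_def by (simp add: split_def o_def)
    qed
    also have "\<dots> \<in> relsub sm" using R by (intro tract_RS[OF lm]) (simp add: isrep_def)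
    finally show ?thesis using gl gl' unfolding isrep_def R'_def by auto
  qed
  then have "q (tract c b) = val R'" by (rule q_rep)
  also have "\<dots> = (\<Sum>(g,x)\<leftarrow>R. rY (r (p \<circ> g) x) b)"
    unfolding val_def R'_def map_map
  proof (rule sum_list_cong')
    fix z assume "z \<in> set R"
    then have gz: "glin sm (fst z)" using gl by auto
    have bz: "blin sm lZ (p \<circ> fst z)" by (rule glin_blin[OF gz])
    have "p \<circ> (\<lambda>y. tract (fst z y) b) = (\<lambda>m. rZ ((p \<circ> fst z) m) b)"
      using p_tr glin_KE[OF gz] by (simp add: fun_eq_iff)
    then show "((\<lambda>(g,x). r (p \<circ> g) x) \<circ> (\<lambda>(g,x). (\<lambda>y. tract (g y) b, x))) z = (\<lambda>(g,x). rY (r (p \<circ> g) x) b) z"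
      using r4[OF bz] by (simp add: split_def)
  qed
  also have "\<dots> = rY (val R) b" unfolding val_def by (simp add: rY_list split_def)
  finally show "q (tract c b) = rY (q c) b" using q_rep[OF R] by simp
next
  fix c assume c: "c \<in> kerev sm"
  obtain R where R: "isrep sm c R" using EXrep c by blast
  have gl: "\<forall>(g,x)\<in>set R. glin sm g" using R by (simp add: isrep_def)
  have "f (q c) = f (val R)" using q_rep[OF R] by simp
  also have "\<dots> = (\<Sum>(g,x)\<leftarrow>R. f (r (p \<circ> g) x))" unfolding val_def by (simp add: fY_list split_def)
  also have "\<dots> = (\<Sum>(g,x)\<leftarrow>R. p (g x))"
  proof (rule arg_cong[where f=sum_list], rule map_cong[OF refl])
    fix z assume "z \<in> set R"
    then have "glin sm (fst z)" using gl by auto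
    then have bz: "blin sm lZ (p \<circ> fst z)" by (rule glin_blin)
    show "(\<lambda>(g,x). f (r (p \<circ> g) x)) z = (\<lambda>(g,x). p (g x)) z"
      using r5[OF bz] by (auto simp: case_prod_beta fun_eq_iff)
  qed
  also have "\<dots> = p (\<Sum>(g,x)\<leftarrow>R. g x)"
  proof -
    have "\<forall>z\<in>set R. (\<lambda>(g,x). g x) z \<in> kerev sm"
    proof
      fix z assume "z \<in> set R"
      then have "glin sm (fst z)" using gl by auto
      then show "(\<lambda>(g,x). g x) z \<in> kerev sm" by (simp add: split_def glin_KE)
    qed
    then have "p (\<Sum>z\<leftarrow>R. (\<lambda>(g,x). g x) z) = (\<Sum>z\<leftarrow>R. p ((\<lambda>(g,x). g x) z))" by (rule p_list)
    then show ?thesis by (simp add: split_def)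
  qed
  also have "\<dots> = p c"
  proof (rule p_cong)
    show "(\<Sum>(g,x)\<leftarrow>R. g x) \<in> kerev sm" using gl by (intro KElist) (auto intro: glin_KE)
    show "c \<in> kerev sm" by (rule c)
    have "c - (\<Sum>(g,x)\<leftarrow>R. g x) \<in> relsub sm" using R by (simp add: isrep_def)
    then show "(\<Sum>(g,x)\<leftarrow>R. g x) - c \<in> relsub sm" using RS_uminus[OF lm] by fastforce
  qed
  finally show "f (q c) = p c" .
qed

end

theorem mainTheorem11:
  fixes sm :: "'b::ring_1 \<Rightarrow> 'm::ab_group_add \<Rightarrow> 'm"
    and lY :: "'b \<Rightarrow> 'y::ab_group_add \<Rightarrow> 'y" and rY :: "'y \<Rightarrow> 'b \<Rightarrow> 'y"
    and lZ :: "'b \<Rightarrow> 'z::ab_group_add \<Rightarrow> 'z" and rZ :: "'z \<Rightarrow> 'b \<Rightarrow> 'z"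
  assumes "lmod sm"
    and "generates_sigma sm"
  shows "formally_smooth sm lY rY lZ rZ"
  unfolding formally_smooth_def
proof (intro allI impI)
  fix f :: "'y \<Rightarrow> 'z" and p
  assume bY: "bimod lY rY" and bZ: "bimod lZ rZ" and E: "E_class sm lY rY lZ rZ f"
    and pk: "kermap sm lZ rZ p"
  from E obtain r :: "('m \<Rightarrow> 'z) \<Rightarrow> ('m \<Rightarrow> 'y)" where fmap: "bimap lY rY lZ rZ f"
    and r1: "\<forall>h. blin sm lZ h \<longrightarrow> blin sm lY (r h)"
    and r2: "\<forall>h h'. blin sm lZ h \<longrightarrow> blin sm lZ h' \<longrightarrow> r (h + h') = r h + r h'"
    and r3: "\<forall>h a. blin sm lZ h \<longrightarrow> a \<in> EndB sm \<longrightarrow> r (h \<circ> a) = r h \<circ> a"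
    and r4: "\<forall>h b. blin sm lZ h \<longrightarrow> r (\<lambda>m. rZ (h m) b) = (\<lambda>m. rY (r h m) b)"
    and r5: "\<forall>h. blin sm lZ h \<longrightarrow> f \<circ> r h = h"
    unfolding E_class_def by blast
  have L: "kermap sm lY rY (q sm p r) \<and> (\<forall>c\<in>kerev sm. f (q sm p r c) = p c)"
    by (rule LIFT[OF assms(1) assms(2) bY bZ fmap])
       (use r1 r2 r3 r4 r5 pk in blast)+
  then show "\<exists>q. kermap sm lY rY q \<and> (\<forall>c\<in>kerev sm. f (q c) = p c)" by blast
qed

end
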